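(* Let $B$ be a nonempty finite set, $T\in\omega$, $x\in\mathbb{R}_{\ge 0}$, and $S\subseteq\omega^B$. If $\mu_{T+1}(S)\ge x/(T+1+x)$, then $\mu_T(\partial S)\ge x/(T+x)$, where $0/0$ is interpreted as $0$ in the case $T=x=0$.
   Context: $\omega$ denotes the set of nonnegative integers and $\omega^B$ the set of functions $B\to\omega$ (multisets on $B$). For $b\in B$, $e_b\in\omega^B$ is the indicator of $b$. For $S\subseteq\omega^B$, $\partial S:=\{f\in\omega^B : f+e_b\in S\text{ for some }b\in B\}$. For $T\in\omega$, $\mu_T$ is the probability measure on $\omega^B$ that is uniform on $\{f\in\omega^B:\sum_{b\in B}f(b)=T\}$ and zero elsewhere. *)

theory Defs
  imports Complex_Main
begin

text \<open>Multisets on a finite nonempty set B are modelled as functions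
  'b \<Rightarrow> nat for a finite type 'b (standing for B).\<close>

definition unit_vec :: "'b \<Rightarrow> ('b \<Rightarrow> nat)" where
  "unit_vec b = (\<lambda>c. if c = b then 1 else 0)"

definition shadow :: "('b \<Rightarrow> nat) set \<Rightarrow> ('b \<Rightarrow> nat) set" where
  "shadow S = {f. \<exists>b. (\<lambda>c. f c + unit_vec b c) \<in> S}"

definition level :: "nat \<Rightarrow> ('b::finite \<Rightarrow> nat) set" where
  "level T = {f. (\<Sum>b\<in>UNIV. f b) = T}"

definition mu :: "nat \<Rightarrow> ('b::finite \<Rightarrow> nat) set \<Rightarrow> real" where
  "mu T S = real (card (S \<inter> level T)) / real (card (level T :: ('b \<Rightarrow> nat) set))"

end

theory Submission
  imports Defs "HOL-Library.FuncSet"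
begin

definition cmp :: "'b::finite set \<Rightarrow> nat \<Rightarrow> ('b \<Rightarrow> nat) set" where
  "cmp B l = {g. (\<forall>c. c \<notin> B \<longrightarrow> g c = 0) \<and> sum g B = l}"

definition mv :: "('b \<Rightarrow> nat) \<Rightarrow> 'b \<Rightarrow> 'b \<Rightarrow> nat \<Rightarrow> ('b \<Rightarrow> nat)" where
  "mv g b c j = g(b := g b - j, c := g c + j)"

definition sh :: "'b \<Rightarrow> ('b \<Rightarrow> nat) \<Rightarrow> ('b \<Rightarrow> nat)" where
  "sh b0 h = h(b0 := Suc (h b0))"

lemma finite_bounded_funs: "finite {g::'b::finite \<Rightarrow> nat. \<forall>c. g c \<le> n}"
proof -
  have "{g::'b \<Rightarrow> nat. \<forall>c. g c \<le> n} \<subseteq> PiE UNIV (\<lambda>_. {..n})"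
    by (auto simp: PiE_iff)
  moreover have "finite (PiE (UNIV::'b set) (\<lambda>_. {..n}))"
    by (rule finite_PiE) auto
  ultimately show ?thesis by (rule finite_subset)
qed

lemma cmp_le: "g \<in> cmp B l \<Longrightarrow> g c \<le> l"
proof -
  assume g: "g \<in> cmp B l"
  show "g c \<le> l"
  proof (cases "c \<in> B")
    case True
    have "g c \<le> sum g B" using True by (intro member_le_sum) auto
    then show ?thesis using g by (simp add: cmp_def)
  next
    case False then show ?thesis using g by (simp add: cmp_def)
  qed
qed

lemma finite_comp[simp]: "finite (cmp B l)"
  by (rule finite_subset[OF _ finite_bounded_funs[of l]]) (auto intro: cmp_le)

lemma cmp_empty: "cmp {} l = (if l = 0 then {\<lambda>_. 0} else {})"
  by (auto simp: cmp_def)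

lemma cmp_zero: "cmp B 0 = {\<lambda>_. 0}"
  by (auto simp: cmp_def)

lemma sum_upd_nat:
  fixes g :: "'b::finite \<Rightarrow> nat"
  assumes "b \<in> B"
  shows "sum (g(b := v)) B + g b = sum g B + v"
proof -
  have fin: "finite B" by simp
  have "sum (g(b := v)) B = v + sum g (B - {b})"
    using assms by (simp add: sum.remove[OF fin assms])
  moreover have "sum g B = g b + sum g (B - {b})"
    by (simp add: sum.remove[OF fin assms])
  ultimately show ?thesis by simp
qed

lemma mv_cmp:
  assumes g: "g \<in> cmp B l" and b: "b \<in> B" and c: "c \<in> B" and bc: "b \<noteq> c" and j: "j \<le> g b"
  shows "mv g b c j \<in> cmp B l"
proof -
  let ?g1 = "g(b := g b - j)"
  have s1: "sum ?g1 B + g b = sum g B + (g b - j)" by (rule sum_upd_nat[OF b])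
  have s2: "sum (?g1(c := ?g1 c + j)) B + ?g1 c = sum ?g1 B + (?g1 c + j)" by (rule sum_upd_nat[OF c])
  have "sum (mv g b c j) B = l"
    using s1 s2 g j bc by (simp add: mv_def cmp_def)
  moreover have "\<forall>d. d \<notin> B \<longrightarrow> mv g b c j d = 0"
    using g b c by (auto simp: mv_def cmp_def)
  ultimately show ?thesis by (simp add: cmp_def)
qed

lemma mv_apply: "b \<noteq> c \<Longrightarrow> mv g b c j b = g b - j" "mv g b c j c = g c + j"
  "d \<noteq> b \<Longrightarrow> d \<noteq> c \<Longrightarrow> mv g b c j d = g d"
  by (auto simp: mv_def)

lemma mv_back: "b \<noteq> c \<Longrightarrow> j \<le> g b \<Longrightarrow> mv (mv g b c j) c b j = g"
  by (auto simp: mv_def fun_eq_iff)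

lemma sum_upd_out: "b \<notin> B \<Longrightarrow> sum (g(b := v)) B = sum g B"
  by (rule sum.cong) auto

lemma sum_if_out[simp]: "b \<notin> B \<Longrightarrow> (\<Sum>x\<in>B. if x = b then v else g x) = sum g B"
  by (rule sum.cong) auto

lemma cmp_sub:
  assumes "b0 \<notin> B"
  shows "cmp B l = {g \<in> cmp (insert b0 B) l. g b0 = 0}"
proof -
  have "\<And>g. g b0 = 0 \<Longrightarrow> sum g (insert b0 B) = sum g B"
    using assms by (simp add: sum.insert)
  then show ?thesis using assms unfolding cmp_def by (auto, metis)
qed

lemma sh_cmp:
  assumes "b0 \<notin> B" and "0 < l"
  shows "sh b0 ` cmp (insert b0 B) (l - 1) = {g \<in> cmp (insert b0 B) l. g b0 \<noteq> 0}"
proof (intro set_eqI iffI)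
  fix g assume "g \<in> sh b0 ` cmp (insert b0 B) (l - 1)"
  then obtain h where h: "h \<in> cmp (insert b0 B) (l - 1)" and g: "g = sh b0 h" by auto
  have "sum g (insert b0 B) = g b0 + sum g B" using assms by (simp add: sum.insert)
  also have "sum g B = sum h B" using assms g by (simp add: sh_def sum_upd_out)
  also have "g b0 = Suc (h b0)" using g by (simp add: sh_def)
  also have "Suc (h b0) + sum h B = Suc (sum h (insert b0 B))" using assms by (simp add: sum.insert)
  finally have "sum g (insert b0 B) = l" using h assms by (simp add: cmp_def)
  moreover have "\<forall>c. c \<notin> insert b0 B \<longrightarrow> g c = 0" using h g by (auto simp: cmp_def sh_def)
  ultimately show "g \<in> {g \<in> cmp (insert b0 B) l. g b0 \<noteq> 0}" using g by (simp add: cmp_def sh_def)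
next
  fix g assume g: "g \<in> {g \<in> cmp (insert b0 B) l. g b0 \<noteq> 0}"
  define h where "h = g(b0 := g b0 - 1)"
  have gh: "g = sh b0 h" using g by (auto simp: h_def sh_def fun_eq_iff)
  have "sum h (insert b0 B) = h b0 + sum h B" using assms by (simp add: sum.insert)
  also have "sum h B = sum g B" using assms by (simp add: h_def sum_upd_out)
  also have "h b0 = g b0 - 1" by (simp add: h_def)
  finally have "sum h (insert b0 B) = g b0 - 1 + sum g B" .
  moreover have "sum g (insert b0 B) = g b0 + sum g B" using assms by (simp add: sum.insert)
  ultimately have "sum h (insert b0 B) = l - 1" using g by (auto simp: cmp_def)
  moreover have "\<forall>c. c \<notin> insert b0 B \<longrightarrow> h c = 0" using g by (auto simp: cmp_def h_def)
  ultimately have "h \<in> cmp (insert b0 B) (l - 1)" by (simp add: cmp_def)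
  then show "g \<in> sh b0 ` cmp (insert b0 B) (l - 1)" using gh by auto
qed

lemma inj_sh: "inj (sh b0)"
  by (rule injI) (auto simp: sh_def fun_eq_iff split: if_splits)

lemma sum_cmp_split:
  assumes "b0 \<notin> B" and "0 < l"
  shows "(\<Sum>g\<in>cmp (insert b0 B) l. F g) = (\<Sum>g\<in>cmp B l. F g) + (\<Sum>h\<in>cmp (insert b0 B) (l - 1). F (sh b0 h))"
proof -
  let ?C = "cmp (insert b0 B) l"
  have eq: "?C = cmp B l \<union> sh b0 ` cmp (insert b0 B) (l - 1)"
    using cmp_sub[OF assms(1), of l] sh_cmp[OF assms] by auto
  have dj: "cmp B l \<inter> sh b0 ` cmp (insert b0 B) (l - 1) = {}"
    using cmp_sub[OF assms(1), of l] sh_cmp[OF assms] by auto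
  have "(\<Sum>g\<in>?C. F g) = (\<Sum>g\<in>cmp B l. F g) + (\<Sum>g\<in>sh b0 ` cmp (insert b0 B) (l - 1). F g)"
    unfolding eq by (rule sum.union_disjoint) (use dj in auto)
  also have "(\<Sum>g\<in>sh b0 ` cmp (insert b0 B) (l - 1). F g) = (\<Sum>h\<in>cmp (insert b0 B) (l - 1). F (sh b0 h))"
    by (rule sum.reindex[unfolded comp_def]) (rule inj_on_subset[OF inj_sh], simp)
  finally show ?thesis .
qed

definition mg :: "'b \<Rightarrow> 'b \<Rightarrow> ('b \<Rightarrow> nat) \<Rightarrow> ('b \<Rightarrow> nat)" where
  "mg b0 c v = v(b0 := 0, c := v c + v b0)"

lemma RX:
  assumes b0: "b0 \<notin> B" and l: "0 < l"
  shows "(\<Sum>u\<in>cmp B l. \<Sum>c\<in>B. \<Sum>j\<in>{1..u c}. F u c j)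
       = (\<Sum>h\<in>cmp (insert b0 B) (l - 1). \<Sum>c\<in>B. F (mg b0 c (sh b0 h)) c (Suc (h b0)))"
proof -
  let ?S = "Sigma (cmp B l) (\<lambda>u. Sigma B (\<lambda>c. {1..u c}))"
  let ?T = "cmp (insert b0 B) (l - 1) \<times> B"
  have L: "(\<Sum>u\<in>cmp B l. \<Sum>c\<in>B. \<Sum>j\<in>{1..u c}. F u c j) = (\<Sum>(u,c,j)\<in>?S. F u c j)"
    by (simp add: sum.Sigma)
  have R: "(\<Sum>h\<in>cmp (insert b0 B) (l - 1). \<Sum>c\<in>B. F (mg b0 c (sh b0 h)) c (Suc (h b0)))
        = (\<Sum>(h,c)\<in>?T. F (mg b0 c (sh b0 h)) c (Suc (h b0)))"
    by (simp add: sum.cartesian_product)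
  have "(\<Sum>(u,c,j)\<in>?S. F u c j) = (\<Sum>(h,c)\<in>?T. F (mg b0 c (sh b0 h)) c (Suc (h b0)))"
  proof (rule sum.reindex_bij_witness[where j = "\<lambda>(u,c,j). (u(c := u c - j, b0 := j - 1), c)"
        and i = "\<lambda>(h,c). (mg b0 c (sh b0 h), c, Suc (h b0))"])
    fix a assume a: "a \<in> ?S"
    obtain u c j where a': "a = (u,c,j)" by (cases a) auto
    have u: "u \<in> cmp B l" and c: "c \<in> B" and j: "1 \<le> j" "j \<le> u c" using a a' by auto
    have cb0: "c \<noteq> b0" using c b0 by auto
    have ub0: "u b0 = 0" using u b0 by (simp add: cmp_def)
    show "(\<lambda>(h,c). (mg b0 c (sh b0 h), c, Suc (h b0))) ((\<lambda>(u,c,j). (u(c := u c - j, b0 := j - 1), c)) a) = a"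
      using a' cb0 ub0 j by (auto simp: mg_def sh_def fun_eq_iff)
    let ?h = "u(c := u c - j, b0 := j - 1)"
    have "sum ?h (insert b0 B) = (j - 1) + sum (u(c := u c - j)) B"
      using b0 by (simp add: sum.insert sum_upd_out)
    moreover have "sum (u(c := u c - j)) B + u c = sum u B + (u c - j)" by (rule sum_upd_nat[OF c])
    moreover have "sum u B = l" using u by (simp add: cmp_def)
    ultimately have "sum ?h (insert b0 B) = l - 1" using j by simp
    moreover have "\<forall>d. d \<notin> insert b0 B \<longrightarrow> ?h d = 0" using u c by (auto simp: cmp_def)
    ultimately have "?h \<in> cmp (insert b0 B) (l - 1)" by (simp add: cmp_def)
    then show "(\<lambda>(u,c,j). (u(c := u c - j, b0 := j - 1), c)) a \<in> ?T" using a' c by simp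
  next
    fix b assume b: "b \<in> ?T"
    obtain h c where b': "b = (h,c)" by (cases b) auto
    have h: "h \<in> cmp (insert b0 B) (l - 1)" and c: "c \<in> B" using b b' by auto
    have cb0: "c \<noteq> b0" using c b0 by auto
    show "(\<lambda>(u,c,j). (u(c := u c - j, b0 := j - 1), c)) ((\<lambda>(h,c). (mg b0 c (sh b0 h), c, Suc (h b0))) b) = b"
      using b' cb0 by (auto simp: mg_def sh_def fun_eq_iff)
    let ?u = "mg b0 c (sh b0 h)"
    have "sum ?u B + ((sh b0 h)(b0 := 0)) c = sum ((sh b0 h)(b0 := 0)) B + ((sh b0 h) c + (sh b0 h) b0)"
      unfolding mg_def by (rule sum_upd_nat[OF c])
    then have "sum ?u B + (sh b0 h) c = sum (sh b0 h) B + ((sh b0 h) c + (sh b0 h) b0)"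
      using b0 cb0 by (simp add: sum_upd_out)
    moreover have "sum (sh b0 h) B = sum h B" using b0 by (simp add: sh_def sum_upd_out)
    moreover have "sum h (insert b0 B) = h b0 + sum h B" using b0 by (simp add: sum.insert)
    moreover have "sum h (insert b0 B) = l - 1" using h by (simp add: cmp_def)
    ultimately have "sum ?u B = l" using l cb0 by (simp add: sh_def)
    moreover have "\<forall>d. d \<notin> B \<longrightarrow> ?u d = 0" using h c by (auto simp: cmp_def mg_def sh_def)
    ultimately have "?u \<in> cmp B l" by (simp add: cmp_def)
    moreover have "Suc (h b0) \<le> ?u c" using cb0 by (simp add: mg_def sh_def)
    ultimately show "(\<lambda>(h,c). (mg b0 c (sh b0 h), c, Suc (h b0))) b \<in> ?S" using b' c by simp
  next
    fix a assume a: "a \<in> ?S"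
    obtain u c j where a': "a = (u,c,j)" by (cases a) auto
    have u: "u \<in> cmp B l" and c: "c \<in> B" and j: "1 \<le> j" "j \<le> u c" using a a' by auto
    have cb0: "c \<noteq> b0" using c b0 by auto
    have ub0: "u b0 = 0" using u b0 by (simp add: cmp_def)
    have "mg b0 c (sh b0 (u(c := u c - j, b0 := j - 1))) = u"
      using cb0 ub0 j by (auto simp: mg_def sh_def fun_eq_iff)
    then show "(\<lambda>(h,c). F (mg b0 c (sh b0 h)) c (Suc (h b0))) ((\<lambda>(u,c,j). (u(c := u c - j, b0 := j - 1), c)) a)
         = (\<lambda>(u,c,j). F u c j) a"
      using a' j by simp
  qed
  then show ?thesis using L R by simp
qed

definition EE :: "'b::finite set \<Rightarrow> nat \<Rightarrow> (('b \<Rightarrow> nat) \<Rightarrow> real) \<Rightarrow> real" where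
  "EE B l x = (\<Sum>g\<in>cmp B l. \<Sum>b\<in>B. \<Sum>c\<in>B - {b}. \<Sum>j\<in>{1..g b}. (x g - x (mv g b c j))\<^sup>2)"

lemma mv_sh: "b \<noteq> b0 \<Longrightarrow> b \<noteq> c \<Longrightarrow> mv (sh b0 h) b c j = sh b0 (mv h b c j)"
  by (auto simp: mv_def sh_def fun_eq_iff)

lemma mv_sh0: "c \<noteq> b0 \<Longrightarrow> j \<le> h b0 \<Longrightarrow> mv (sh b0 h) b0 c j = sh b0 (mv h b0 c j)"
  by (auto simp: mv_def sh_def fun_eq_iff)

lemma mv_full: "c \<noteq> b0 \<Longrightarrow> mv (sh b0 h) b0 c (Suc (h b0)) = mg b0 c (sh b0 h)"
  by (auto simp: mv_def sh_def mg_def fun_eq_iff)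

lemma mv_mg: "c \<noteq> b0 \<Longrightarrow> mv (mg b0 c (sh b0 h)) c b0 (Suc (h b0)) = sh b0 h"
  by (auto simp: mv_def sh_def mg_def fun_eq_iff)

lemma EE_split:
  assumes b0: "b0 \<notin> B" and l: "0 < l"
  shows "EE (insert b0 B) l x = EE B l x + EE (insert b0 B) (l - 1) (\<lambda>h. x (sh b0 h))
      + 2 * (\<Sum>h\<in>cmp (insert b0 B) (l - 1). \<Sum>c\<in>B. (x (sh b0 h) - x (mg b0 c (sh b0 h)))\<^sup>2)"
proof -
  let ?B' = "insert b0 B"
  define F where "F g = (\<Sum>b\<in>?B'. \<Sum>c\<in>?B' - {b}. \<Sum>j\<in>{1..g b}. (x g - x (mv g b c j))\<^sup>2)" for g
  define X where "X = (\<Sum>h\<in>cmp ?B' (l - 1). \<Sum>c\<in>B. (x (sh b0 h) - x (mg b0 c (sh b0 h)))\<^sup>2)"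
  have E1: "EE ?B' l x = (\<Sum>g\<in>cmp B l. F g) + (\<Sum>h\<in>cmp ?B' (l - 1). F (sh b0 h))"
    unfolding EE_def F_def by (rule sum_cmp_split[OF b0 l])
  have A: "(\<Sum>g\<in>cmp B l. F g) = EE B l x
      + (\<Sum>g\<in>cmp B l. \<Sum>b\<in>B. \<Sum>j\<in>{1..g b}. (x g - x (mv g b b0 j))\<^sup>2)"
  proof -
    have "F g = (\<Sum>b\<in>B. \<Sum>c\<in>B - {b}. \<Sum>j\<in>{1..g b}. (x g - x (mv g b c j))\<^sup>2)
              + (\<Sum>b\<in>B. \<Sum>j\<in>{1..g b}. (x g - x (mv g b b0 j))\<^sup>2)" if g: "g \<in> cmp B l" for g
    proof -
      have gb0: "g b0 = 0" using g b0 by (simp add: cmp_def)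
      have "F g = (\<Sum>c\<in>?B' - {b0}. \<Sum>j\<in>{1..g b0}. (x g - x (mv g b0 c j))\<^sup>2)
               + (\<Sum>b\<in>B. \<Sum>c\<in>?B' - {b}. \<Sum>j\<in>{1..g b}. (x g - x (mv g b c j))\<^sup>2)"
        unfolding F_def using b0 by (simp add: sum.insert)
      also have "(\<Sum>c\<in>?B' - {b0}. \<Sum>j\<in>{1..g b0}. (x g - x (mv g b0 c j))\<^sup>2) = 0"
        using gb0 by simp
      also have "(\<Sum>b\<in>B. \<Sum>c\<in>?B' - {b}. \<Sum>j\<in>{1..g b}. (x g - x (mv g b c j))\<^sup>2)
          = (\<Sum>b\<in>B. (\<Sum>c\<in>B - {b}. \<Sum>j\<in>{1..g b}. (x g - x (mv g b c j))\<^sup>2)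
               + (\<Sum>j\<in>{1..g b}. (x g - x (mv g b b0 j))\<^sup>2))"
      proof (rule sum.cong[OF refl])
        fix b assume b: "b \<in> B"
        have "?B' - {b} = insert b0 (B - {b})" using b b0 by auto
        then show "(\<Sum>c\<in>?B' - {b}. \<Sum>j\<in>{1..g b}. (x g - x (mv g b c j))\<^sup>2)
          = (\<Sum>c\<in>B - {b}. \<Sum>j\<in>{1..g b}. (x g - x (mv g b c j))\<^sup>2)
               + (\<Sum>j\<in>{1..g b}. (x g - x (mv g b b0 j))\<^sup>2)"
          using b0 by (simp add: sum.insert)
      qed
      finally show ?thesis by (simp add: sum.distrib)
    qed
    then have "(\<Sum>g\<in>cmp B l. F g) = (\<Sum>g\<in>cmp B l. (\<Sum>b\<in>B. \<Sum>c\<in>B - {b}. \<Sum>j\<in>{1..g b}. (x g - x (mv g b c j))\<^sup>2)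
              + (\<Sum>b\<in>B. \<Sum>j\<in>{1..g b}. (x g - x (mv g b b0 j))\<^sup>2))"
      by (rule sum.cong[OF refl])
    then show ?thesis unfolding EE_def by (simp add: sum.distrib)
  qed
  have Bp: "(\<Sum>h\<in>cmp ?B' (l - 1). F (sh b0 h)) = EE ?B' (l - 1) (\<lambda>h. x (sh b0 h)) + X"
  proof -
    have "F (sh b0 h) = (\<Sum>b\<in>?B'. \<Sum>c\<in>?B' - {b}. \<Sum>j\<in>{1..h b}. (x (sh b0 h) - x (sh b0 (mv h b c j)))\<^sup>2)
        + (\<Sum>c\<in>B. (x (sh b0 h) - x (mg b0 c (sh b0 h)))\<^sup>2)" for h
    proof -
      define G where "G b = (\<Sum>c\<in>?B' - {b}. \<Sum>j\<in>{1..h b}. (x (sh b0 h) - x (sh b0 (mv h b c j)))\<^sup>2)" for b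
      have Bb0: "?B' - {b0} = B" using b0 by auto
      have "F (sh b0 h) = (\<Sum>c\<in>?B' - {b0}. \<Sum>j\<in>{1..sh b0 h b0}. (x (sh b0 h) - x (mv (sh b0 h) b0 c j))\<^sup>2)
          + (\<Sum>b\<in>B. \<Sum>c\<in>?B' - {b}. \<Sum>j\<in>{1..sh b0 h b}. (x (sh b0 h) - x (mv (sh b0 h) b c j))\<^sup>2)"
        unfolding F_def using b0 by (simp add: sum.insert)
      also have "(\<Sum>b\<in>B. \<Sum>c\<in>?B' - {b}. \<Sum>j\<in>{1..sh b0 h b}. (x (sh b0 h) - x (mv (sh b0 h) b c j))\<^sup>2)
          = (\<Sum>b\<in>B. G b)"
      proof (rule sum.cong[OF refl])
        fix b assume b: "b \<in> B"
        then have bb0: "b \<noteq> b0" using b0 by auto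
        have "sh b0 h b = h b" using bb0 by (simp add: sh_def)
        then show "(\<Sum>c\<in>?B' - {b}. \<Sum>j\<in>{1..sh b0 h b}. (x (sh b0 h) - x (mv (sh b0 h) b c j))\<^sup>2) = G b"
          unfolding G_def using bb0 by (intro sum.cong refl) (auto simp: mv_sh)
      qed
      also have "(\<Sum>c\<in>?B' - {b0}. \<Sum>j\<in>{1..sh b0 h b0}. (x (sh b0 h) - x (mv (sh b0 h) b0 c j))\<^sup>2)
          = G b0 + (\<Sum>c\<in>B. (x (sh b0 h) - x (mg b0 c (sh b0 h)))\<^sup>2)"
      proof -
        have "(\<Sum>j\<in>{1..sh b0 h b0}. (x (sh b0 h) - x (mv (sh b0 h) b0 c j))\<^sup>2)
            = (\<Sum>j\<in>{1..h b0}. (x (sh b0 h) - x (sh b0 (mv h b0 c j)))\<^sup>2) + (x (sh b0 h) - x (mg b0 c (sh b0 h)))\<^sup>2"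
          if c: "c \<in> B" for c
        proof -
          have cb0: "c \<noteq> b0" using c b0 by auto
          have "(\<Sum>j\<in>{1..sh b0 h b0}. (x (sh b0 h) - x (mv (sh b0 h) b0 c j))\<^sup>2)
              = (\<Sum>j\<in>{1..h b0}. (x (sh b0 h) - x (mv (sh b0 h) b0 c j))\<^sup>2) + (x (sh b0 h) - x (mv (sh b0 h) b0 c (Suc (h b0))))\<^sup>2"
            by (simp add: sh_def)
          also have "(\<Sum>j\<in>{1..h b0}. (x (sh b0 h) - x (mv (sh b0 h) b0 c j))\<^sup>2)
              = (\<Sum>j\<in>{1..h b0}. (x (sh b0 h) - x (sh b0 (mv h b0 c j)))\<^sup>2)"
            by (rule sum.cong[OF refl]) (simp add: mv_sh0[OF cb0])
          finally show ?thesis by (simp add: mv_full[OF cb0])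
        qed
        then have "(\<Sum>c\<in>B. \<Sum>j\<in>{1..sh b0 h b0}. (x (sh b0 h) - x (mv (sh b0 h) b0 c j))\<^sup>2)
           = (\<Sum>c\<in>B. (\<Sum>j\<in>{1..h b0}. (x (sh b0 h) - x (sh b0 (mv h b0 c j)))\<^sup>2) + (x (sh b0 h) - x (mg b0 c (sh b0 h)))\<^sup>2)"
          by (rule sum.cong[OF refl])
        then show ?thesis unfolding G_def Bb0 by (simp add: sum.distrib)
      qed
      also have "G b0 + (\<Sum>c\<in>B. (x (sh b0 h) - x (mg b0 c (sh b0 h)))\<^sup>2) + (\<Sum>b\<in>B. G b)
          = (\<Sum>b\<in>?B'. G b) + (\<Sum>c\<in>B. (x (sh b0 h) - x (mg b0 c (sh b0 h)))\<^sup>2)"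
        using b0 by (simp add: sum.insert)
      finally show ?thesis unfolding G_def .
    qed
    then show ?thesis unfolding EE_def X_def by (simp add: sum.distrib)
  qed
  have C: "(\<Sum>g\<in>cmp B l. \<Sum>b\<in>B. \<Sum>j\<in>{1..g b}. (x g - x (mv g b b0 j))\<^sup>2) = X"
  proof -
    have "(\<Sum>g\<in>cmp B l. \<Sum>b\<in>B. \<Sum>j\<in>{1..g b}. (x g - x (mv g b b0 j))\<^sup>2)
        = (\<Sum>h\<in>cmp ?B' (l - 1). \<Sum>c\<in>B. (x (mg b0 c (sh b0 h)) - x (mv (mg b0 c (sh b0 h)) c b0 (Suc (h b0))))\<^sup>2)"
      by (rule RX[OF b0 l])
    also have "\<dots> = X" unfolding X_def
    proof (intro sum.cong refl)
      fix h c assume c: "c \<in> B"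
      then have cb0: "c \<noteq> b0" using b0 by auto
      show "(x (mg b0 c (sh b0 h)) - x (mv (mg b0 c (sh b0 h)) c b0 (Suc (h b0))))\<^sup>2
          = (x (sh b0 h) - x (mg b0 c (sh b0 h)))\<^sup>2"
        by (simp add: mv_mg[OF cb0] power2_commute)
    qed
    finally show ?thesis .
  qed
  show ?thesis using E1 A Bp C unfolding X_def by simp
qed

lemma sum_cmp_l: "u \<in> cmp B l \<Longrightarrow> (\<Sum>c\<in>B. real (u c)) = real l"
  by (simp add: cmp_def flip: of_nat_sum)

lemma RX1:
  fixes G :: "('b::finite \<Rightarrow> nat) \<Rightarrow> real"
  assumes b0: "b0 \<notin> B" and l: "0 < l"
  shows "(\<Sum>h\<in>cmp (insert b0 B) (l - 1). \<Sum>c\<in>B. G (mg b0 c (sh b0 h))) = real l * (\<Sum>u\<in>cmp B l. G u)"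
proof -
  have "(\<Sum>h\<in>cmp (insert b0 B) (l - 1). \<Sum>c\<in>B. G (mg b0 c (sh b0 h)))
      = (\<Sum>u\<in>cmp B l. \<Sum>c\<in>B. \<Sum>j\<in>{1..u c}. G u)"
    using RX[OF b0 l, of "\<lambda>u c j. G u"] by simp
  also have "\<dots> = (\<Sum>u\<in>cmp B l. (\<Sum>c\<in>B. real (u c)) * G u)"
    by (simp add: sum_distrib_right)
  also have "\<dots> = (\<Sum>u\<in>cmp B l. real l * G u)"
    by (rule sum.cong[OF refl]) (simp add: sum_cmp_l)
  finally show ?thesis by (simp add: sum_distrib_left)
qed

lemma R3:
  fixes G :: "('b::finite \<Rightarrow> nat) \<Rightarrow> real"
  shows "(\<Sum>u\<in>cmp B l. \<Sum>c\<in>B. \<Sum>c'\<in>B - {c}. \<Sum>j\<in>{1..u c}. G u)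
      = (real (card B) - 1) * real l * (\<Sum>u\<in>cmp B l. G u)"
proof -
  have "(\<Sum>c\<in>B. \<Sum>c'\<in>B - {c}. \<Sum>j\<in>{1..u c}. G u) = (real (card B) - 1) * real l * G u"
    if u: "u \<in> cmp B l" for u
  proof -
    have "(\<Sum>c\<in>B. \<Sum>c'\<in>B - {c}. \<Sum>j\<in>{1..u c}. G u) = (\<Sum>c\<in>B. (real (card B) - 1) * (real (u c) * G u))"
    proof (rule sum.cong[OF refl])
      fix c assume c: "c \<in> B"
      then have "card B \<ge> 1" by (simp add: Suc_le_eq card_gt_0_iff) (auto)
      then show "(\<Sum>c'\<in>B - {c}. \<Sum>j\<in>{1..u c}. G u) = (real (card B) - 1) * (real (u c) * G u)"
        using c by (simp add: of_nat_diff)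
    qed
    also have "\<dots> = (real (card B) - 1) * ((\<Sum>c\<in>B. real (u c)) * G u)"
      by (simp add: sum_distrib_left sum_distrib_right)
    finally show ?thesis using sum_cmp_l[OF u] by simp
  qed
  then show ?thesis by (simp add: sum_distrib_left)
qed

lemma R4:
  fixes G :: "('b::finite \<Rightarrow> nat) \<Rightarrow> real"
  shows "(\<Sum>u\<in>cmp B l. \<Sum>c\<in>B. \<Sum>c'\<in>B - {c}. \<Sum>j\<in>{1..u c}. G (mv u c c' j))
      = (\<Sum>u\<in>cmp B l. \<Sum>c\<in>B. \<Sum>c'\<in>B - {c}. \<Sum>j\<in>{1..u c}. G u)"
proof -
  let ?I = "Sigma (cmp B l) (\<lambda>u. Sigma B (\<lambda>c. Sigma (B - {c}) (\<lambda>c'. {1..u c})))"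
  have fin: "finite (B - {c})" for c by simp
  have L: "(\<Sum>u\<in>cmp B l. \<Sum>c\<in>B. \<Sum>c'\<in>B - {c}. \<Sum>j\<in>{1..u c}. H u c c' j) = (\<Sum>(u,c,c',j)\<in>?I. H u c c' j)"
    for H :: "('b \<Rightarrow> nat) \<Rightarrow> 'b \<Rightarrow> 'b \<Rightarrow> nat \<Rightarrow> real"
    by (simp add: sum.Sigma)
  have "(\<Sum>(u,c,c',j)\<in>?I. G (mv u c c' j)) = (\<Sum>(u,c,c',j)\<in>?I. G u)"
  proof (rule sum.reindex_bij_witness[where i = "\<lambda>(u,c,c',j). (mv u c c' j, c', c, j)"
        and j = "\<lambda>(u,c,c',j). (mv u c c' j, c', c, j)"])
    fix a assume a: "a \<in> ?I"
    obtain u c c' j where a': "a = (u,c,c',j)" by (cases a) auto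
    have u: "u \<in> cmp B l" and c: "c \<in> B" and c': "c' \<in> B" "c' \<noteq> c" and j: "1 \<le> j" "j \<le> u c"
      using a a' by auto
    show "(\<lambda>(u,c,c',j). (mv u c c' j, c', c, j)) ((\<lambda>(u,c,c',j). (mv u c c' j, c', c, j)) a) = a"
      using a' c' j by (simp add: mv_back)
    have "mv u c c' j \<in> cmp B l" using mv_cmp[OF u c c'(1) c'(2)[symmetric] j(2)] .
    moreover have "mv u c c' j c' = u c' + j" by (simp add: mv_def)
    ultimately show "(\<lambda>(u,c,c',j). (mv u c c' j, c', c, j)) a \<in> ?I"
      using a' c c' j by auto
    show "(\<lambda>(u,c,c',j). G u) ((\<lambda>(u,c,c',j). (mv u c c' j, c', c, j)) a) = (\<lambda>(u,c,c',j). G (mv u c c' j)) a"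
      using a' by simp
  next
    fix a assume a: "a \<in> ?I"
    obtain u c c' j where a': "a = (u,c,c',j)" by (cases a) auto
    have u: "u \<in> cmp B l" and c: "c \<in> B" and c': "c' \<in> B" "c' \<noteq> c" and j: "1 \<le> j" "j \<le> u c"
      using a a' by auto
    show "(\<lambda>(u,c,c',j). (mv u c c' j, c', c, j)) ((\<lambda>(u,c,c',j). (mv u c c' j, c', c, j)) a) = a"
      using a' c' j by (simp add: mv_back)
    have "mv u c c' j \<in> cmp B l" using mv_cmp[OF u c c'(1) c'(2)[symmetric] j(2)] .
    moreover have "mv u c c' j c' = u c' + j" by (simp add: mv_def)
    ultimately show "(\<lambda>(u,c,c',j). (mv u c c' j, c', c, j)) a \<in> ?I"
      using a' c c' j by auto
  qed
  then show ?thesis using L[of "\<lambda>u c c' j. G (mv u c c' j)"] L[of "\<lambda>u c c' j. G u"] by simp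
qed

lemma mv_mg2: "c \<noteq> b0 \<Longrightarrow> c' \<noteq> b0 \<Longrightarrow> c' \<noteq> c \<Longrightarrow>
    mv (mg b0 c (sh b0 h)) c c' (Suc (h b0)) = mg b0 c' (sh b0 h)"
  by (auto simp: mv_def sh_def mg_def fun_eq_iff)

lemma R2:
  fixes G :: "('b::finite \<Rightarrow> nat) \<Rightarrow> ('b \<Rightarrow> nat) \<Rightarrow> real"
  assumes b0: "b0 \<notin> B" and l: "0 < l"
  shows "(\<Sum>h\<in>cmp (insert b0 B) (l - 1). \<Sum>c\<in>B. \<Sum>c'\<in>B - {c}. G (mg b0 c (sh b0 h)) (mg b0 c' (sh b0 h)))
      = (\<Sum>u\<in>cmp B l. \<Sum>c\<in>B. \<Sum>c'\<in>B - {c}. \<Sum>j\<in>{1..u c}. G u (mv u c c' j))"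
proof -
  have "(\<Sum>u\<in>cmp B l. \<Sum>c\<in>B. \<Sum>c'\<in>B - {c}. \<Sum>j\<in>{1..u c}. G u (mv u c c' j))
      = (\<Sum>u\<in>cmp B l. \<Sum>c\<in>B. \<Sum>j\<in>{1..u c}. \<Sum>c'\<in>B - {c}. G u (mv u c c' j))"
    by (intro sum.cong refl sum.swap)
  also have "\<dots> = (\<Sum>h\<in>cmp (insert b0 B) (l - 1). \<Sum>c\<in>B. \<Sum>c'\<in>B - {c}.
          G (mg b0 c (sh b0 h)) (mv (mg b0 c (sh b0 h)) c c' (Suc (h b0))))"
    by (rule RX[OF b0 l])
  also have "\<dots> = (\<Sum>h\<in>cmp (insert b0 B) (l - 1). \<Sum>c\<in>B. \<Sum>c'\<in>B - {c}. G (mg b0 c (sh b0 h)) (mg b0 c' (sh b0 h)))"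
  proof (intro sum.cong refl)
    fix h c c' assume c: "c \<in> B" and c': "c' \<in> B - {c}"
    have "c \<noteq> b0" "c' \<noteq> b0" "c' \<noteq> c" using c c' b0 by auto
    then show "G (mg b0 c (sh b0 h)) (mv (mg b0 c (sh b0 h)) c c' (Suc (h b0))) = G (mg b0 c (sh b0 h)) (mg b0 c' (sh b0 h))"
      by (simp add: mv_mg2)
  qed
  finally show ?thesis by simp
qed

lemma EE_shift: "EE B l (\<lambda>g. x g - m) = EE B l x"
  by (simp add: EE_def)

lemma EE_nonneg: "0 \<le> EE B l x"
  by (simp add: EE_def sum_nonneg)

lemma mean_eq: "finite A \<Longrightarrow> real (card A) * ((\<Sum>g\<in>A. x g) / real (card A)) = (\<Sum>g\<in>A. x g)"
  by (cases "card A = 0") auto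

lemma centered_sq:
  assumes "finite A" "(\<Sum>g\<in>A. y g) = 0"
  shows "(\<Sum>g\<in>A. (y g + m)\<^sup>2) = (\<Sum>g\<in>A. (y g)\<^sup>2) + real (card A) * m\<^sup>2"
proof -
  have "(\<Sum>g\<in>A. (y g + m)\<^sup>2) = (\<Sum>g\<in>A. (y g)\<^sup>2 + 2 * m * y g + m\<^sup>2)"
    by (rule sum.cong) (auto simp: power2_eq_square algebra_simps)
  also have "\<dots> = (\<Sum>g\<in>A. (y g)\<^sup>2) + 2 * m * (\<Sum>g\<in>A. y g) + real (card A) * m\<^sup>2"
    by (simp add: sum.distrib sum_distrib_left)
  finally show ?thesis using assms by simp
qed

lemma sq_sum_expand:
  fixes a :: "'c \<Rightarrow> real"
  assumes "finite B"
  shows "(\<Sum>c\<in>B. a c)\<^sup>2 = (\<Sum>c\<in>B. (a c)\<^sup>2) + (\<Sum>c\<in>B. \<Sum>c'\<in>B - {c}. a c * a c')"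
proof -
  have "(\<Sum>c\<in>B. a c)\<^sup>2 = (\<Sum>c\<in>B. \<Sum>c'\<in>B. a c * a c')"
    by (simp add: power2_eq_square sum_product)
  also have "\<dots> = (\<Sum>c\<in>B. (a c)\<^sup>2 + (\<Sum>c'\<in>B - {c}. a c * a c'))"
  proof (rule sum.cong[OF refl])
    fix c assume c: "c \<in> B"
    show "(\<Sum>c'\<in>B. a c * a c') = (a c)\<^sup>2 + (\<Sum>c'\<in>B - {c}. a c * a c')"
      using sum.remove[OF assms c, of "\<lambda>c'. a c * a c'"] by (simp add: power2_eq_square)
  qed
  finally show ?thesis by (simp add: sum.distrib)
qed

lemma zeta_bound:
  fixes xi :: "('b::finite \<Rightarrow> nat) \<Rightarrow> real"
  assumes b0: "b0 \<notin> B" and l: "0 < l"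
    and IH: "2 * (real l + real (card B) - 1) * (\<Sum>u\<in>cmp B l. (xi u)\<^sup>2) \<le> EE B l xi"
  shows "(\<Sum>h\<in>cmp (insert b0 B) (l - 1). (\<Sum>c\<in>B. xi (mg b0 c (sh b0 h)))\<^sup>2)
       \<le> (real l - 1) * (real (card B) - 1) * (\<Sum>u\<in>cmp B l. (xi u)\<^sup>2)"
proof -
  let ?C1 = "cmp (insert b0 B) (l - 1)"
  let ?Q = "\<Sum>u\<in>cmp B l. (xi u)\<^sup>2"
  let ?Off = "\<Sum>u\<in>cmp B l. \<Sum>c\<in>B. \<Sum>c'\<in>B - {c}. \<Sum>j\<in>{1..u c}. xi u * xi (mv u c c' j)"
  have "(\<Sum>h\<in>?C1. (\<Sum>c\<in>B. xi (mg b0 c (sh b0 h)))\<^sup>2)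
      = (\<Sum>h\<in>?C1. (\<Sum>c\<in>B. (xi (mg b0 c (sh b0 h)))\<^sup>2) + (\<Sum>c\<in>B. \<Sum>c'\<in>B - {c}. xi (mg b0 c (sh b0 h)) * xi (mg b0 c' (sh b0 h))))"
    by (rule sum.cong[OF refl]) (rule sq_sum_expand, simp)
  also have "\<dots> = real l * ?Q + ?Off"
    using RX1[OF b0 l, of "\<lambda>u. (xi u)\<^sup>2"] R2[OF b0 l, of "\<lambda>a b. xi a * xi b"] by (simp add: sum.distrib)
  finally have Z: "(\<Sum>h\<in>?C1. (\<Sum>c\<in>B. xi (mg b0 c (sh b0 h)))\<^sup>2) = real l * ?Q + ?Off" .
  have "EE B l xi = (\<Sum>u\<in>cmp B l. \<Sum>c\<in>B. \<Sum>c'\<in>B - {c}. \<Sum>j\<in>{1..u c}.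
        (xi u)\<^sup>2 + (xi (mv u c c' j))\<^sup>2 - 2 * (xi u * xi (mv u c c' j)))"
    unfolding EE_def by (intro sum.cong refl) (simp add: power2_eq_square algebra_simps)
  also have "\<dots> = (\<Sum>u\<in>cmp B l. \<Sum>c\<in>B. \<Sum>c'\<in>B - {c}. \<Sum>j\<in>{1..u c}. (xi u)\<^sup>2)
      + (\<Sum>u\<in>cmp B l. \<Sum>c\<in>B. \<Sum>c'\<in>B - {c}. \<Sum>j\<in>{1..u c}. (xi (mv u c c' j))\<^sup>2) - 2 * ?Off"
    by (simp add: sum.distrib sum_subtractf sum_distrib_left)
  also have "\<dots> = 2 * ((real (card B) - 1) * real l * ?Q) - 2 * ?Off"
    using R3[of "\<lambda>u. (xi u)\<^sup>2" B l] R4[of "\<lambda>u. (xi u)\<^sup>2" B l] by simp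
  finally have "EE B l xi = 2 * ((real (card B) - 1) * real l * ?Q) - 2 * ?Off" .
  then have "?Off \<le> (real (card B) - 1) * real l * ?Q - (real l + real (card B) - 1) * ?Q"
    using IH by linarith
  then show ?thesis using Z by (simp add: algebra_simps)
qed

lemma amgm_sum:
  fixes eta zeta :: "'c \<Rightarrow> real"
  assumes fin: "finite A" and t: "1 \<le> t" and Z: "(\<Sum>h\<in>A. (zeta h)\<^sup>2) \<le> (t - 1) * q" and q: "0 \<le> q"
  shows "2 * (\<Sum>h\<in>A. eta h * zeta h) \<le> (t - 1) * (\<Sum>h\<in>A. (eta h)\<^sup>2) + q"
proof (cases "t = 1")
  case True
  then have "(\<Sum>h\<in>A. (zeta h)\<^sup>2) \<le> 0" using Z by simp
  then have "\<forall>h\<in>A. (zeta h)\<^sup>2 = 0"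
    using sum_nonneg_eq_0_iff[OF fin, of "\<lambda>h. (zeta h)\<^sup>2"] by (simp add: order_antisym sum_nonneg)
  then have "(\<Sum>h\<in>A. eta h * zeta h) = 0" by simp
  then show ?thesis using True q by simp
next
  case False
  then have tp: "0 < t - 1" using t by simp
  have "2 * (eta h * zeta h) \<le> (t - 1) * (eta h)\<^sup>2 + (zeta h)\<^sup>2 / (t - 1)" for h
  proof -
    have "0 \<le> ((t - 1) * eta h - zeta h)\<^sup>2" by simp
    then have "2 * (t - 1) * (eta h * zeta h) \<le> (t - 1)\<^sup>2 * (eta h)\<^sup>2 + (zeta h)\<^sup>2"
      by (simp add: power2_eq_square algebra_simps)
    then show ?thesis using tp by (simp add: field_simps power2_eq_square)
  qed
  then have "2 * (\<Sum>h\<in>A. eta h * zeta h) \<le> (\<Sum>h\<in>A. (t - 1) * (eta h)\<^sup>2 + (zeta h)\<^sup>2 / (t - 1))"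
    by (simp add: sum_distrib_left sum_mono)
  also have "\<dots> = (t - 1) * (\<Sum>h\<in>A. (eta h)\<^sup>2) + (\<Sum>h\<in>A. (zeta h)\<^sup>2) / (t - 1)"
    by (simp add: sum.distrib sum_distrib_left sum_divide_distrib)
  also have "(\<Sum>h\<in>A. (zeta h)\<^sup>2) / (t - 1) \<le> q" using Z tp by (simp add: divide_le_eq mult.commute)
  finally show ?thesis by simp
qed

lemma poinc_step:
  fixes x :: "('b::finite \<Rightarrow> nat) \<Rightarrow> real"
  assumes b0: "b0 \<notin> B" and Bne: "B \<noteq> {}" and l: "0 < l"
    and IHB: "\<And>y. (\<Sum>g\<in>cmp B l. y g) = 0 \<Longrightarrow>
        2 * (real l + real (card B) - 1) * (\<Sum>g\<in>cmp B l. (y g)\<^sup>2) \<le> EE B l y"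
    and IHl: "\<And>y. (\<Sum>g\<in>cmp (insert b0 B) (l - 1). y g) = 0 \<Longrightarrow>
        2 * (real (l - 1) + real (card (insert b0 B)) - 1) * (\<Sum>g\<in>cmp (insert b0 B) (l - 1). (y g)\<^sup>2)
          \<le> EE (insert b0 B) (l - 1) y"
    and x0: "(\<Sum>g\<in>cmp (insert b0 B) l. x g) = 0"
  shows "2 * (real l + real (card (insert b0 B)) - 1) * (\<Sum>g\<in>cmp (insert b0 B) l. (x g)\<^sup>2)
      \<le> EE (insert b0 B) l x"
proof -
  let ?B' = "insert b0 B"
  define C0 where "C0 = cmp B l"
  define C1 where "C1 = cmp ?B' (l - 1)"
  define N0 where "N0 = real (card C0)"
  define N1 where "N1 = real (card C1)"
  define S0 where "S0 = (\<Sum>g\<in>C0. x g)"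
  define S1 where "S1 = (\<Sum>h\<in>C1. x (sh b0 h))"
  define m0 where "m0 = S0 / N0"
  define m1 where "m1 = S1 / N1"
  define xi where "xi g = x g - m0" for g
  define eta where "eta h = x (sh b0 h) - m1" for h
  define nB where "nB = real (card B)"
  define L where "L = real l"
  define d where "d = m1 - m0"
  define zeta where "zeta h = (\<Sum>c\<in>B. xi (mg b0 c (sh b0 h)))" for h
  have fB: "finite B" by simp
  have cardB': "real (card ?B') = nB + 1" using b0 by (simp add: nB_def)
  have nB1: "1 \<le> nB" using Bne by (simp add: nB_def Suc_le_eq card_gt_0_iff)
  have L1: "1 \<le> L" using l by (simp add: L_def)
  have S: "S0 + S1 = 0" using x0 sum_cmp_split[OF b0 l, of x] by (simp add: S0_def S1_def C0_def C1_def)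
  have N0m0: "N0 * m0 = S0" unfolding N0_def m0_def S0_def by (rule mean_eq) (simp add: C0_def)
  have N1m1: "N1 * m1 = S1" unfolding N1_def m1_def S1_def by (rule mean_eq) (simp add: C1_def)
  have sxi: "(\<Sum>g\<in>C0. xi g) = 0" using N0m0 by (simp add: xi_def sum_subtractf S0_def N0_def)
  have seta: "(\<Sum>h\<in>C1. eta h) = 0" using N1m1 by (simp add: eta_def sum_subtractf S1_def N1_def)
  have sq0: "(\<Sum>g\<in>C0. (x g)\<^sup>2) = (\<Sum>g\<in>C0. (xi g)\<^sup>2) + N0 * m0\<^sup>2"
    using centered_sq[of C0 xi m0] sxi by (simp add: xi_def C0_def N0_def)
  have sq1: "(\<Sum>h\<in>C1. (x (sh b0 h))\<^sup>2) = (\<Sum>h\<in>C1. (eta h)\<^sup>2) + N1 * m1\<^sup>2"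
    using centered_sq[of C1 eta m1] seta by (simp add: eta_def C1_def N1_def)
  have sqsplit: "(\<Sum>g\<in>cmp ?B' l. (x g)\<^sup>2) = (\<Sum>g\<in>C0. (x g)\<^sup>2) + (\<Sum>h\<in>C1. (x (sh b0 h))\<^sup>2)"
    using sum_cmp_split[OF b0 l, of "\<lambda>g. (x g)\<^sup>2"] by (simp add: C0_def C1_def)
  have K: "N1 * nB = L * N0"
    using RX1[OF b0 l, of "\<lambda>_. 1"] by (simp add: N1_def nB_def L_def N0_def C0_def C1_def)
  have IH1: "2 * (L + nB - 1) * (\<Sum>g\<in>C0. (xi g)\<^sup>2) \<le> EE B l x"
    using IHB[of xi] sxi EE_shift[of B l x m0] by (simp add: xi_def[abs_def] C0_def L_def nB_def)
  have IH2: "2 * (L + nB - 1) * (\<Sum>h\<in>C1. (eta h)\<^sup>2) \<le> EE ?B' (l - 1) (\<lambda>h. x (sh b0 h))"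
  proof -
    have h1: "2 * (real (l - 1) + real (card ?B') - 1) * (\<Sum>h\<in>C1. (eta h)\<^sup>2) \<le> EE ?B' (l - 1) eta"
      using IHl[of eta] seta by (simp add: C1_def)
    have h2: "EE ?B' (l - 1) eta = EE ?B' (l - 1) (\<lambda>h. x (sh b0 h))"
      unfolding eta_def by (rule EE_shift)
    have h3: "real (l - 1) + real (card ?B') - 1 = L + nB - 1"
      using l cardB' by (simp add: L_def of_nat_diff)
    show ?thesis using h1 unfolding h2 h3 .
  qed
  define X where "X = (\<Sum>h\<in>C1. \<Sum>c\<in>B. (x (sh b0 h) - x (mg b0 c (sh b0 h)))\<^sup>2)"
  have Xeq: "X = nB * N1 * d\<^sup>2 + nB * (\<Sum>h\<in>C1. (eta h)\<^sup>2) - 2 * (\<Sum>h\<in>C1. eta h * zeta h)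
      + L * (\<Sum>g\<in>C0. (xi g)\<^sup>2)"
  proof -
    have "(\<Sum>c\<in>B. (x (sh b0 h) - x (mg b0 c (sh b0 h)))\<^sup>2)
        = nB * (d + eta h)\<^sup>2 - 2 * ((d + eta h) * zeta h) + (\<Sum>c\<in>B. (xi (mg b0 c (sh b0 h)))\<^sup>2)" for h
    proof -
      have "(\<Sum>c\<in>B. (x (sh b0 h) - x (mg b0 c (sh b0 h)))\<^sup>2)
          = (\<Sum>c\<in>B. (d + eta h)\<^sup>2 - 2 * ((d + eta h) * xi (mg b0 c (sh b0 h))) + (xi (mg b0 c (sh b0 h)))\<^sup>2)"
        by (rule sum.cong[OF refl]) (simp add: xi_def eta_def d_def power2_eq_square algebra_simps)
      also have "\<dots> = nB * (d + eta h)\<^sup>2 - 2 * ((d + eta h) * zeta h) + (\<Sum>c\<in>B. (xi (mg b0 c (sh b0 h)))\<^sup>2)"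
        by (simp only: sum.distrib sum_subtractf zeta_def nB_def sum_constant flip: sum_distrib_left)
      finally show ?thesis .
    qed
    then have "X = (\<Sum>h\<in>C1. nB * (d + eta h)\<^sup>2 - 2 * ((d + eta h) * zeta h) + (\<Sum>c\<in>B. (xi (mg b0 c (sh b0 h)))\<^sup>2))"
      unfolding X_def by (rule sum.cong[OF refl])
    also have "\<dots> = nB * (\<Sum>h\<in>C1. (d + eta h)\<^sup>2) - 2 * (\<Sum>h\<in>C1. (d + eta h) * zeta h)
        + (\<Sum>h\<in>C1. \<Sum>c\<in>B. (xi (mg b0 c (sh b0 h)))\<^sup>2)"
      by (simp only: sum.distrib sum_subtractf flip: sum_distrib_left)
    also have "(\<Sum>h\<in>C1. (d + eta h) * zeta h) = d * (\<Sum>h\<in>C1. zeta h) + (\<Sum>h\<in>C1. eta h * zeta h)"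
      by (simp add: distrib_right sum.distrib sum_distrib_left)
    also have "(\<Sum>h\<in>C1. \<Sum>c\<in>B. (xi (mg b0 c (sh b0 h)))\<^sup>2) = L * (\<Sum>g\<in>C0. (xi g)\<^sup>2)"
      using RX1[OF b0 l, of "\<lambda>u. (xi u)\<^sup>2"] by (simp add: C0_def C1_def L_def)
    also have "(\<Sum>h\<in>C1. zeta h) = 0"
      using RX1[OF b0 l, of xi] sxi by (simp add: zeta_def C0_def C1_def)
    also have "(\<Sum>h\<in>C1. (d + eta h)\<^sup>2) = (\<Sum>h\<in>C1. (eta h)\<^sup>2) + N1 * d\<^sup>2"
      using centered_sq[of C1 eta d] seta by (simp add: C1_def N1_def add.commute)
    finally show ?thesis by (simp add: algebra_simps)
  qed
  have Zb: "(\<Sum>h\<in>C1. (zeta h)\<^sup>2) \<le> (L - 1) * (nB - 1) * (\<Sum>g\<in>C0. (xi g)\<^sup>2)"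
  proof -
    have "2 * (real l + real (card B) - 1) * (\<Sum>u\<in>cmp B l. (xi u)\<^sup>2) \<le> EE B l xi"
      using IHB[of xi] sxi by (simp add: C0_def)
    from zeta_bound[OF b0 l this] show ?thesis by (simp add: zeta_def C0_def C1_def L_def nB_def)
  qed
  have q0: "0 \<le> (L - 1) * (\<Sum>g\<in>C0. (xi g)\<^sup>2)" using L1 by (simp add: sum_nonneg)
  have AM: "2 * (\<Sum>h\<in>C1. eta h * zeta h) \<le> (nB - 1) * (\<Sum>h\<in>C1. (eta h)\<^sup>2) + (L - 1) * (\<Sum>g\<in>C0. (xi g)\<^sup>2)"
    by (rule amgm_sum[OF _ nB1 _ q0]) (simp add: C1_def, use Zb in \<open>simp add: algebra_simps\<close>)
  have Xb: "X \<ge> (\<Sum>g\<in>C0. (xi g)\<^sup>2) + (\<Sum>h\<in>C1. (eta h)\<^sup>2) + nB * N1 * d\<^sup>2"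
    using Xeq AM by (simp add: algebra_simps)
  have EEs: "EE ?B' l x = EE B l x + EE ?B' (l - 1) (\<lambda>h. x (sh b0 h)) + 2 * X"
    using EE_split[OF b0 l, of x] by (simp add: X_def C1_def)
  have alg: "(L + nB) * (N0 * m0\<^sup>2 + N1 * m1\<^sup>2) = nB * N1 * d\<^sup>2"
  proof -
    have e1: "N0 * m0 = - (N1 * m1)" using N0m0 N1m1 S by simp
    have "nB * N0 * m0\<^sup>2 = - (nB * N1 * m0 * m1)"
      using e1 by (simp add: power2_eq_square) (metis mult.assoc mult.commute mult_minus_right)
    moreover have "L * N1 * m1\<^sup>2 = - (nB * N1 * m0 * m1)"
    proof -
      have "L * N1 * m1\<^sup>2 = L * m1 * (N1 * m1)" by (simp add: power2_eq_square algebra_simps)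
      also have "\<dots> = - (L * N0 * m0 * m1)" using e1 by (simp add: algebra_simps)
      also have "\<dots> = - (nB * N1 * m0 * m1)" using K by (simp add: algebra_simps)
      finally show ?thesis .
    qed
    moreover have "L * N0 * m0\<^sup>2 = nB * N1 * m0\<^sup>2" using K by (simp add: mult.commute)
    ultimately show ?thesis by (simp add: d_def power2_eq_square algebra_simps)
  qed
  have "2 * (real l + real (card ?B') - 1) * (\<Sum>g\<in>cmp ?B' l. (x g)\<^sup>2)
      = 2 * (L + nB) * ((\<Sum>g\<in>C0. (xi g)\<^sup>2) + (\<Sum>h\<in>C1. (eta h)\<^sup>2)) + 2 * ((L + nB) * (N0 * m0\<^sup>2 + N1 * m1\<^sup>2))"
    using sqsplit sq0 sq1 cardB' by (simp add: L_def algebra_simps)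
  also have "\<dots> = 2 * (L + nB) * ((\<Sum>g\<in>C0. (xi g)\<^sup>2) + (\<Sum>h\<in>C1. (eta h)\<^sup>2)) + 2 * (nB * N1 * d\<^sup>2)"
    using alg by simp
  also have "\<dots> \<le> EE ?B' l x"
    using EEs IH1 IH2 Xb by (simp add: algebra_simps)
  finally show ?thesis .
qed

lemma cmp_single: "cmp {b0} l = {(\<lambda>_. 0)(b0 := l)}"
  by (auto simp: cmp_def fun_eq_iff)

lemma single_point_sq:
  assumes "A = {p}" "(\<Sum>g\<in>A. x g) = 0"
  shows "(\<Sum>g\<in>A. (x g)\<^sup>2) = (0::real)"
  using assms by simp

lemma poinc:
  fixes x :: "('b::finite \<Rightarrow> nat) \<Rightarrow> real"
  assumes "(\<Sum>g\<in>cmp B l. x g) = 0"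
  shows "2 * (real l + real (card B) - 1) * (\<Sum>g\<in>cmp B l. (x g)\<^sup>2) \<le> EE B l x"
proof -
  have "finite B" by simp
  then show ?thesis using assms
  proof (induction B arbitrary: l x rule: finite_induct)
    case empty
    show ?case
    proof (cases "l = 0")
      case True
      then have "(\<Sum>g\<in>cmp {} l. (x g)\<^sup>2) = 0" using empty by (simp add: cmp_empty)
      then show ?thesis using EE_nonneg[of "{}" l x] by simp
    next
      case False
      then show ?thesis using EE_nonneg[of "{}" l x] by (simp add: cmp_empty)
    qed
  next
    case (insert b0 B)
    show ?case
    proof (cases "B = {}")
      case True
      then have "(\<Sum>g\<in>cmp (insert b0 B) l. (x g)\<^sup>2) = 0"
        using insert.prems by (simp add: cmp_single fun_upd_def)
      then show ?thesis using EE_nonneg[of "insert b0 B" l x] by simp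
    next
      case Bne: False
      have "\<And>x. (\<Sum>g\<in>cmp (insert b0 B) l. x g) = 0 \<Longrightarrow>
          2 * (real l + real (card (insert b0 B)) - 1) * (\<Sum>g\<in>cmp (insert b0 B) l. (x g)\<^sup>2)
          \<le> EE (insert b0 B) l x"
      proof (induction l)
        case 0
        then have "(\<Sum>g\<in>cmp (insert b0 B) 0. (x g)\<^sup>2) = 0" by (simp add: cmp_zero)
        then show ?case using EE_nonneg[of "insert b0 B" 0 x] by simp
      next
        case (Suc l')
        show ?case
          by (rule poinc_step[OF insert.hyps(2) Bne _ insert.IH _ Suc.prems])
             (use Suc.IH in auto)
      qed
      then show ?thesis using insert.prems by blast
    qed
  qed
qed

lemma trans_exists: "P 0 \<Longrightarrow> \<not> P (j::nat) \<Longrightarrow> \<exists>k. 1 \<le> k \<and> k \<le> j \<and> P (k - 1) \<and> \<not> P k"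
proof (induction j)
  case 0 then show ?case by simp
next
  case (Suc j)
  show ?case
  proof (cases "P j")
    case True then show ?thesis using Suc.prems by (intro exI[of _ "Suc j"]) auto
  next
    case False
    then obtain k where "1 \<le> k \<and> k \<le> j \<and> P (k - 1) \<and> \<not> P k" using Suc.IH Suc.prems by blast
    then show ?thesis by (intro exI[of _ k]) auto
  qed
qed

lemma mv_zero[simp]: "mv g b c 0 = g"
  by (simp add: mv_def)

lemma mv_step: "b \<noteq> c \<Longrightarrow> Suc i \<le> g b \<Longrightarrow> mv (mv g b c i) b c 1 = mv g b c (Suc i)"
  by (auto simp: mv_def fun_eq_iff)

lemma line_ineq:
  assumes bc: "b \<noteq> c"
  shows "card {(g,j). g \<in> A \<and> g \<in> cmp UNIV l \<and> 1 \<le> j \<and> j \<le> g b \<and> mv g b c j \<notin> A}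
    \<le> (\<Sum>g\<in>{g \<in> cmp UNIV l. g \<in> A \<and> 1 \<le> g b \<and> mv g b c 1 \<notin> A}. g b * (g c + 1))"
proof -
  define X where "X = {(g,j). g \<in> A \<and> g \<in> cmp UNIV l \<and> 1 \<le> j \<and> j \<le> g b \<and> mv g b c j \<notin> A}"
  define S1 where "S1 = {(g,k,j). g \<in> A \<and> g \<in> cmp UNIV l \<and> 1 \<le> k \<and> k \<le> j \<and> j \<le> g b
      \<and> mv g b c (k - 1) \<in> A \<and> mv g b c k \<notin> A}"
  define G where "G = {g \<in> cmp UNIV l. g \<in> A \<and> 1 \<le> g b \<and> mv g b c 1 \<notin> A}"
  define S2 where "S2 = Sigma G (\<lambda>h. {..h c} \<times> {1..h b})"
  have finS1: "finite S1"
  proof (rule finite_subset)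
    show "S1 \<subseteq> cmp UNIV l \<times> {..l} \<times> {..l}"
      unfolding S1_def by clarsimp (meson cmp_le le_trans)
  qed simp
  have finG: "finite G" by (simp add: G_def)
  have finS2: "finite S2" unfolding S2_def using finG by auto
  have "X \<subseteq> (\<lambda>(g,k,j). (g,j)) ` S1"
  proof
    fix p assume p: "p \<in> X"
    obtain g j where pj: "p = (g,j)" by (cases p)
    have g: "g \<in> A" "g \<in> cmp UNIV l" "1 \<le> j" "j \<le> g b" "mv g b c j \<notin> A" using p pj by (auto simp: X_def)
    obtain k where k: "1 \<le> k" "k \<le> j" "mv g b c (k - 1) \<in> A" "mv g b c k \<notin> A"
      using trans_exists[of "\<lambda>k. mv g b c k \<in> A" j] g by auto
    then have "(g,k,j) \<in> S1" using g by (auto simp: S1_def)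
    then show "p \<in> (\<lambda>(g,k,j). (g,j)) ` S1" using pj by force
  qed
  then have c1: "card X \<le> card S1"
    using card_mono[OF finite_imageI[OF finS1]] card_image_le[OF finS1] le_trans by blast
  define f where "f = (\<lambda>(g,k,j). (mv g b c (k - 1), k - 1, j - k + 1))"
  have inj: "inj_on f S1"
  proof (rule inj_onI)
    fix p q assume p: "p \<in> S1" and q: "q \<in> S1" and e: "f p = f q"
    obtain g k j where pp: "p = (g,k,j)" by (cases p) auto
    obtain g' k' j' where qq: "q = (g',k',j')" by (cases q) auto
    have hp: "1 \<le> k" "k \<le> j" "j \<le> g b" using p pp by (auto simp: S1_def)
    have hq: "1 \<le> k'" "k' \<le> j'" "j' \<le> g' b" using q qq by (auto simp: S1_def)
    have e1: "mv g b c (k - 1) = mv g' b c (k' - 1)" and e2: "k - 1 = k' - 1" and e3: "j - k + 1 = j' - k' + 1"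
      using e pp qq by (auto simp: f_def)
    have kk: "k = k'" using e2 hp hq by simp
    have "g = mv (mv g b c (k - 1)) c b (k - 1)" using bc hp by (simp add: mv_back)
    also have "\<dots> = mv (mv g' b c (k' - 1)) c b (k' - 1)" using e1 kk by simp
    also have "\<dots> = g'" using bc hq by (simp add: mv_back)
    finally have "g = g'" .
    moreover have "j = j'" using e3 kk hp hq by simp
    ultimately show "p = q" using pp qq kk by simp
  qed
  have img: "f ` S1 \<subseteq> S2"
  proof
    fix q assume "q \<in> f ` S1"
    then obtain p where p: "p \<in> S1" and q: "q = f p" by auto
    obtain g k j where pp: "p = (g,k,j)" by (cases p) auto
    have h: "g \<in> A" "g \<in> cmp UNIV l" "1 \<le> k" "k \<le> j" "j \<le> g b" "mv g b c (k - 1) \<in> A" "mv g b c k \<notin> A"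
      using p pp by (auto simp: S1_def)
    let ?h = "mv g b c (k - 1)"
    have hb: "?h b = g b - (k - 1)" and hc: "?h c = g c + (k - 1)" using bc by (auto simp: mv_def)
    have hcmp: "?h \<in> cmp UNIV l" using mv_cmp[OF h(2) _ _ bc] h by simp
    have step: "mv ?h b c 1 = mv g b c k" using mv_step[OF bc, of "k - 1" g] h by simp
    have "?h \<in> G" using h hcmp hb step by (auto simp: G_def)
    moreover have "k - 1 \<le> ?h c" using hc by simp
    moreover have "1 \<le> j - k + 1" "j - k + 1 \<le> ?h b" using h hb by auto
    ultimately show "q \<in> S2" using q pp by (simp add: f_def S2_def)
  qed
  have c2: "card S1 \<le> card S2"
    using card_inj_on_le[OF inj img finS2] .
  have c3: "card S2 = (\<Sum>g\<in>G. g b * (g c + 1))"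
    unfolding S2_def using finG by (simp add: card_SigmaI card_cartesian_product mult.commute)
  show ?thesis using c1 c2 c3 by (simp add: X_def G_def)
qed

lemma sum_minus_if: "finite A \<Longrightarrow> (\<Sum>c\<in>A - {b}. f c) = (\<Sum>c\<in>A. if c = b then 0 else f c)"
  by (rule sum.mono_neutral_cong_left) auto

definition ind :: "('b \<Rightarrow> nat) set \<Rightarrow> ('b \<Rightarrow> nat) \<Rightarrow> real" where
  "ind A g = (if g \<in> A then 1 else 0)"

definition Xr :: "('b::finite \<Rightarrow> nat) set \<Rightarrow> nat \<Rightarrow> 'b \<Rightarrow> 'b \<Rightarrow> real" where
  "Xr A l b c = (\<Sum>g\<in>cmp UNIV l. \<Sum>j\<in>{1..g b}. (if g \<in> A \<and> mv g b c j \<notin> A then 1 else 0))"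

lemma Xr_card: "Xr A l b c = real (card {(g,j). g \<in> A \<and> g \<in> cmp UNIV l \<and> 1 \<le> j \<and> j \<le> g b \<and> mv g b c j \<notin> A})"
proof -
  let ?I = "Sigma (cmp UNIV l) (\<lambda>g. {1..g b})"
  have "Xr A l b c = (\<Sum>(g,j)\<in>?I. (if g \<in> A \<and> mv g b c j \<notin> A then 1 else 0))"
    unfolding Xr_def by (simp add: sum.Sigma)
  also have "\<dots> = (\<Sum>p\<in>{p \<in> ?I. fst p \<in> A \<and> mv (fst p) b c (snd p) \<notin> A}. 1)"
    by (simp add: sum.inter_filter[symmetric] case_prod_beta)
  also have "{p \<in> ?I. fst p \<in> A \<and> mv (fst p) b c (snd p) \<notin> A}
      = {(g,j). g \<in> A \<and> g \<in> cmp UNIV l \<and> 1 \<le> j \<and> j \<le> g b \<and> mv g b c j \<notin> A}"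
    by auto
  finally show ?thesis by simp
qed

lemma Xr_le: "b \<noteq> c \<Longrightarrow> Xr A l b c \<le> (\<Sum>g\<in>cmp UNIV l. (if g \<in> A \<and> mv g b c 1 \<notin> A then real (g b) * real (g c + 1) else 0))"
proof -
  assume bc: "b \<noteq> c"
  have "Xr A l b c \<le> real (\<Sum>g\<in>{g \<in> cmp UNIV l. g \<in> A \<and> 1 \<le> g b \<and> mv g b c 1 \<notin> A}. g b * (g c + 1))"
    unfolding Xr_card using line_ineq[OF bc, of A l] by (simp only: of_nat_le_iff)
  also have "\<dots> = (\<Sum>g\<in>{g \<in> cmp UNIV l. g \<in> A \<and> 1 \<le> g b \<and> mv g b c 1 \<notin> A}. real (g b) * real (g c + 1))"
    by (simp only: of_nat_sum of_nat_mult)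
  also have "\<dots> = (\<Sum>g\<in>cmp UNIV l. (if g \<in> A \<and> 1 \<le> g b \<and> mv g b c 1 \<notin> A then real (g b) * real (g c + 1) else 0))"
    by (rule sum.inter_filter) simp
  also have "\<dots> = (\<Sum>g\<in>cmp UNIV l. (if g \<in> A \<and> mv g b c 1 \<notin> A then real (g b) * real (g c + 1) else 0))"
    by (rule sum.cong) auto
  finally show ?thesis .
qed

lemma Xr_swap:
  assumes bc: "b \<noteq> c"
  shows "(\<Sum>g\<in>cmp UNIV l. \<Sum>j\<in>{1..g b}. (if g \<notin> A \<and> mv g b c j \<in> A then 1 else 0)) = Xr A l c b"
proof -
  let ?I = "Sigma (cmp UNIV l) (\<lambda>g. {1..g b})"
  let ?J = "Sigma (cmp UNIV l) (\<lambda>g. {1..g c})"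
  have "(\<Sum>(g,j)\<in>?I. (if g \<notin> A \<and> mv g b c j \<in> A then 1 else 0)) = (\<Sum>(g,j)\<in>?J. (if g \<in> A \<and> mv g c b j \<notin> A then (1::real) else 0))"
  proof (rule sum.reindex_bij_witness[where j = "\<lambda>(g,j). (mv g b c j, j)" and i = "\<lambda>(g,j). (mv g c b j, j)"])
    fix a assume a: "a \<in> ?I"
    obtain g j where aa: "a = (g,j)" by (cases a)
    have g: "g \<in> cmp UNIV l" "1 \<le> j" "j \<le> g b" using a aa by auto
    show "(\<lambda>(g,j). (mv g c b j, j)) ((\<lambda>(g,j). (mv g b c j, j)) a) = a" using aa g bc by (simp add: mv_back)
    have "mv g b c j \<in> cmp UNIV l" using mv_cmp[OF g(1) _ _ bc g(3)] by simp
    moreover have "mv g b c j c = g c + j" by (simp add: mv_def)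
    ultimately show "(\<lambda>(g,j). (mv g b c j, j)) a \<in> ?J" using aa g by simp
    show "(\<lambda>(g,j). if g \<in> A \<and> mv g c b j \<notin> A then 1 else 0) ((\<lambda>(g,j). (mv g b c j, j)) a)
        = (\<lambda>(g,j). if g \<notin> A \<and> mv g b c j \<in> A then 1 else 0) a"
      using aa g bc by (auto simp: mv_back)
  next
    fix a assume a: "a \<in> ?J"
    obtain g j where aa: "a = (g,j)" by (cases a)
    have g: "g \<in> cmp UNIV l" "1 \<le> j" "j \<le> g c" using a aa by auto
    show "(\<lambda>(g,j). (mv g b c j, j)) ((\<lambda>(g,j). (mv g c b j, j)) a) = a" using aa g bc by (simp add: mv_back)
    have "mv g c b j \<in> cmp UNIV l" using mv_cmp[OF g(1) _ _ bc[symmetric] g(3)] by simp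
    moreover have "mv g c b j b = g b + j" by (simp add: mv_def)
    ultimately show "(\<lambda>(g,j). (mv g c b j, j)) a \<in> ?I" using aa g by simp
  qed
  then show ?thesis unfolding Xr_def by (simp add: sum.Sigma)
qed

lemma EE_ind:
  fixes A :: "('b::finite \<Rightarrow> nat) set"
  shows "EE UNIV l (ind A) \<le> 2 * (\<Sum>b\<in>(UNIV::'b set). \<Sum>c\<in>UNIV - {b}. \<Sum>g\<in>cmp UNIV l.
      (if g \<in> A \<and> mv g b c 1 \<notin> A then real (g b) * real (g c + 1) else 0))"
proof -
  have sq: "(ind A g - ind A g')\<^sup>2 = (if g \<in> A \<and> g' \<notin> A then 1 else 0) + (if g \<notin> A \<and> g' \<in> A then 1 else 0)" for g g'
    by (simp add: ind_def)
  have "EE UNIV l (ind A) = (\<Sum>b\<in>(UNIV::'b set). \<Sum>c\<in>UNIV - {b}. \<Sum>g\<in>cmp UNIV l. \<Sum>j\<in>{1..g b}. (ind A g - ind A (mv g b c j))\<^sup>2)"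
    unfolding EE_def by (subst sum.swap) (simp add: sum.swap[of _ "cmp UNIV l"])
  also have "\<dots> = (\<Sum>b\<in>(UNIV::'b set). \<Sum>c\<in>UNIV - {b}. Xr A l b c + Xr A l c b)"
  proof (intro sum.cong refl)
    fix b c :: 'b assume "c \<in> UNIV - {b}"
    then have bc: "b \<noteq> c" by auto
    show "(\<Sum>g\<in>cmp UNIV l. \<Sum>j\<in>{1..g b}. (ind A g - ind A (mv g b c j))\<^sup>2) = Xr A l b c + Xr A l c b"
      unfolding sq using Xr_swap[OF bc, of A l] by (simp add: sum.distrib Xr_def)
  qed
  also have "\<dots> = (\<Sum>b\<in>(UNIV::'b set). \<Sum>c\<in>UNIV - {b}. Xr A l b c) + (\<Sum>b\<in>(UNIV::'b set). \<Sum>c\<in>UNIV - {b}. Xr A l c b)"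
    by (simp add: sum.distrib)
  also have "(\<Sum>b\<in>(UNIV::'b set). \<Sum>c\<in>UNIV - {b}. Xr A l c b) = (\<Sum>b\<in>(UNIV::'b set). \<Sum>c\<in>UNIV - {b}. Xr A l b c)"
  proof -
    have "(\<Sum>b\<in>(UNIV::'b set). \<Sum>c\<in>UNIV - {b}. Xr A l c b) = (\<Sum>b\<in>(UNIV::'b set). \<Sum>c\<in>UNIV. if c = b then 0 else Xr A l c b)"
      by (rule sum.cong[OF refl]) (simp add: sum_minus_if)
    also have "\<dots> = (\<Sum>c\<in>UNIV. \<Sum>b\<in>(UNIV::'b set). if c = b then 0 else Xr A l c b)" by (rule sum.swap)
    also have "\<dots> = (\<Sum>c\<in>UNIV. \<Sum>b\<in>UNIV - {c}. Xr A l c b)"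
      by (rule sum.cong[OF refl]) (simp add: sum_minus_if eq_commute)
    finally show ?thesis .
  qed
  also have "(\<Sum>b\<in>(UNIV::'b set). \<Sum>c\<in>UNIV - {b}. Xr A l b c) \<le> (\<Sum>b\<in>(UNIV::'b set). \<Sum>c\<in>UNIV - {b}. \<Sum>g\<in>cmp UNIV l.
      (if g \<in> A \<and> mv g b c 1 \<notin> A then real (g b) * real (g c + 1) else 0))"
    by (intro sum_mono) (rule Xr_le, auto)
  finally show ?thesis by simp
qed

lemma level_cmp: "level T = cmp UNIV T"
  by (simp add: level_def cmp_def)

lemma cs_count:
  fixes phi :: "'c \<Rightarrow> real"
  assumes "finite D"
  shows "(\<Sum>i\<in>D. phi i)\<^sup>2 \<le> real (card D) * (\<Sum>i\<in>D. (phi i)\<^sup>2)"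
proof (cases "card D = 0")
  case True then show ?thesis using assms by simp
next
  case False
  define k where "k = real (card D)"
  define m where "m = (\<Sum>i\<in>D. phi i) / k"
  have k: "0 < k" using False by (simp add: k_def)
  have "0 \<le> (\<Sum>i\<in>D. (phi i - m)\<^sup>2)" by (simp add: sum_nonneg)
  also have "\<dots> = (\<Sum>i\<in>D. (phi i)\<^sup>2 - 2 * m * phi i + m\<^sup>2)"
    by (rule sum.cong) (auto simp: power2_eq_square algebra_simps)
  also have "\<dots> = (\<Sum>i\<in>D. (phi i)\<^sup>2) - 2 * m * (\<Sum>i\<in>D. phi i) + k * m\<^sup>2"
    by (simp add: sum.distrib sum_subtractf sum_distrib_left k_def)
  finally have "0 \<le> (\<Sum>i\<in>D. (phi i)\<^sup>2) - 2 * m * (\<Sum>i\<in>D. phi i) + k * m\<^sup>2" .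
  then have "0 \<le> k * ((\<Sum>i\<in>D. (phi i)\<^sup>2) - 2 * m * (\<Sum>i\<in>D. phi i) + k * m\<^sup>2)"
    using k by simp
  moreover have "k * ((\<Sum>i\<in>D. (phi i)\<^sup>2) - 2 * m * (\<Sum>i\<in>D. phi i) + k * m\<^sup>2)
      = k * (\<Sum>i\<in>D. (phi i)\<^sup>2) - (\<Sum>i\<in>D. phi i)\<^sup>2"
    using k by (simp add: m_def power2_eq_square field_simps)
  ultimately show ?thesis by (simp add: k_def)
qed

lemma upd_cmp: "f \<in> cmp UNIV T \<Longrightarrow> f(b := Suc (f b)) \<in> cmp UNIV (Suc T)"
proof -
  assume f: "f \<in> cmp UNIV T"
  have "sum (f(b := Suc (f b))) UNIV + f b = sum f UNIV + Suc (f b)" by (rule sum_upd_nat) simp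
  then show ?thesis using f by (simp add: cmp_def)
qed

lemma dn_cmp: "g \<in> cmp UNIV (Suc T) \<Longrightarrow> g b \<noteq> 0 \<Longrightarrow> g(b := g b - 1) \<in> cmp UNIV T"
proof -
  assume g: "g \<in> cmp UNIV (Suc T)" and gb: "g b \<noteq> 0"
  have "sum (g(b := g b - 1)) UNIV + g b = sum g UNIV + (g b - 1)" by (rule sum_upd_nat) simp
  then show ?thesis using g gb by (simp add: cmp_def)
qed

lemma G_reindex:
  fixes F :: "('b::finite \<Rightarrow> nat) \<Rightarrow> 'b \<Rightarrow> real"
  shows "(\<Sum>f\<in>cmp UNIV T. \<Sum>b\<in>UNIV. real (Suc (f b)) * F (f(b := Suc (f b))) b)
       = (\<Sum>g\<in>cmp UNIV (Suc T). \<Sum>b\<in>UNIV. real (g b) * F g b)"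
proof -
  let ?P = "cmp UNIV (Suc T) \<times> (UNIV::'b set)"
  let ?Q = "{p \<in> ?P. fst p (snd p) \<noteq> 0}"
  have "(\<Sum>g\<in>cmp UNIV (Suc T). \<Sum>b\<in>UNIV. real (g b) * F g b) = (\<Sum>(g,b)\<in>?P. real (g b) * F g b)"
    by (simp add: sum.cartesian_product)
  also have "\<dots> = (\<Sum>(g,b)\<in>?Q. real (g b) * F g b)"
    by (rule sum.mono_neutral_right) auto
  also have "\<dots> = (\<Sum>(f,b)\<in>cmp UNIV T \<times> (UNIV::'b set). real (Suc (f b)) * F (f(b := Suc (f b))) b)"
  proof (rule sum.reindex_bij_witness[where i = "\<lambda>(f,b). (f(b := Suc (f b)), b)" and j = "\<lambda>(g,b). (g(b := g b - 1), b)"])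
    fix a :: "('b \<Rightarrow> nat) \<times> 'b" assume a: "a \<in> ?Q"
    obtain g b where aa: "a = (g,b)" by (cases a)
    have g: "g \<in> cmp UNIV (Suc T)" "g b \<noteq> 0" using a aa by auto
    show "(\<lambda>(f,b). (f(b := Suc (f b)), b)) ((\<lambda>(g,b). (g(b := g b - 1), b)) a) = a"
      using aa g by (auto simp: fun_eq_iff)
    show "(\<lambda>(g,b). (g(b := g b - 1), b)) a \<in> cmp UNIV T \<times> UNIV" using aa dn_cmp[OF g] by simp
    show "(\<lambda>(f,b). real (Suc (f b)) * F (f(b := Suc (f b))) b) ((\<lambda>(g,b). (g(b := g b - 1), b)) a)
        = (\<lambda>(g,b). real (g b) * F g b) a"
    proof -
      have "(g(b := g b - 1))(b := Suc (g b - 1)) = g" using g by (auto simp: fun_eq_iff)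
      then show ?thesis using aa g by simp
    qed
  next
    fix a :: "('b \<Rightarrow> nat) \<times> 'b" assume a: "a \<in> cmp UNIV T \<times> (UNIV::'b set)"
    obtain f b where aa: "a = (f,b)" by (cases a)
    have f: "f \<in> cmp UNIV T" using a aa by auto
    show "(\<lambda>(g,b). (g(b := g b - 1), b)) ((\<lambda>(f,b). (f(b := Suc (f b)), b)) a) = a"
      using aa by (auto simp: fun_eq_iff)
    show "(\<lambda>(f,b). (f(b := Suc (f b)), b)) a \<in> ?Q" using aa upd_cmp[OF f] by simp
  qed
  also have "\<dots> = (\<Sum>f\<in>cmp UNIV T. \<Sum>b\<in>UNIV. real (Suc (f b)) * F (f(b := Suc (f b))) b)"
    by (simp add: sum.cartesian_product)
  finally show ?thesis by simp
qed

lemma phi_dn: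
  fixes A :: "('b::finite \<Rightarrow> nat) set"
  assumes g: "g \<in> cmp UNIV (Suc T)" and gb: "g b \<noteq> 0" and gA: "g \<in> A"
  shows "(\<Sum>c\<in>UNIV. if (g(b := g b - 1))(c := Suc ((g(b := g b - 1)) c)) \<in> A
            then real (Suc ((g(b := g b - 1)) c)) else 0)
       = real T + real (card (UNIV :: 'b set)) - (\<Sum>c\<in>UNIV - {b}. if mv g b c 1 \<notin> A then real (g c + 1) else 0)"
proof -
  let ?h = "g(b := g b - 1)"
  let ?H = "\<lambda>c. if ?h(c := Suc (?h c)) \<in> A then real (Suc (?h c)) else 0"
  have "(\<Sum>c\<in>UNIV. ?H c) = ?H b + (\<Sum>c\<in>UNIV - {b}. ?H c)"
    by (rule sum.remove) auto
  also have "?H b = real (g b)"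
  proof -
    have "?h(b := Suc (?h b)) = g" using gb by (auto simp: fun_eq_iff)
    then show ?thesis using gA gb by simp
  qed
  also have "(\<Sum>c\<in>UNIV - {b}. ?H c) = (\<Sum>c\<in>UNIV - {b}. real (g c + 1) - (if mv g b c 1 \<notin> A then real (g c + 1) else 0))"
  proof (rule sum.cong[OF refl])
    fix c assume "c \<in> UNIV - {b}"
    then have cb: "c \<noteq> b" by auto
    have "?h(c := Suc (?h c)) = mv g b c 1" using cb by (auto simp: mv_def fun_eq_iff)
    moreover have "Suc (?h c) = g c + 1" using cb by simp
    ultimately show "?H c = real (g c + 1) - (if mv g b c 1 \<notin> A then real (g c + 1) else 0)" by simp
  qed
  also have "\<dots> = (\<Sum>c\<in>UNIV - {b}. real (g c + 1)) - (\<Sum>c\<in>UNIV - {b}. if mv g b c 1 \<notin> A then real (g c + 1) else 0)"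
    by (simp add: sum_subtractf)
  also have "real (g b) + (\<Sum>c\<in>UNIV - {b}. real (g c + 1)) = real T + real (card (UNIV :: 'b set))"
  proof -
    have "(\<Sum>c\<in>UNIV - {b}. real (g c + 1)) = (\<Sum>c\<in>UNIV - {b}. real (g c)) + real (card (UNIV - {b}))"
      by (simp add: sum.distrib)
    moreover have "real (g b) + (\<Sum>c\<in>UNIV - {b}. real (g c)) = (\<Sum>c\<in>UNIV. real (g c))"
      by (rule sum.remove[symmetric]) auto
    moreover have "(\<Sum>c\<in>UNIV. real (g c)) = real (Suc T)" using g by (simp add: cmp_def flip: of_nat_sum)
    moreover have "card (UNIV - {b}) = card (UNIV :: 'b set) - 1" by (simp add: card_Diff_singleton)
    moreover have "card (UNIV :: 'b set) \<ge> 1" by (simp add: Suc_le_eq card_gt_0_iff)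
    ultimately show ?thesis by (simp add: of_nat_diff)
  qed
  ultimately show ?thesis by linarith
qed

theorem theorem1:
  fixes S :: "('b::finite \<Rightarrow> nat) set" and T :: nat and x :: real
  assumes "x \<ge> 0"
    and "mu (T + 1) S \<ge> x / (real T + 1 + x)"
  shows "mu T (shadow S) \<ge> x / (real T + x)"
proof -
  define L1 where "L1 = (cmp UNIV (Suc T) :: ('b \<Rightarrow> nat) set)"
  define L0 where "L0 = (cmp UNIV T :: ('b \<Rightarrow> nat) set)"
  define A where "A = S \<inter> L1"
  define D where "D = shadow S \<inter> L0"
  define N where "N = real (card L1)"
  define NT where "NT = real (card L0)"
  define a where "a = real (card A)"
  define d where "d = real (card D)"
  define n where "n = real (card (UNIV :: 'b set))"
  define phi where "phi f = (\<Sum>b\<in>UNIV. if f(b := Suc (f b)) \<in> A then real (Suc (f b)) else 0)" for f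
  define W where "W = (\<Sum>g\<in>L1. \<Sum>b\<in>UNIV. \<Sum>c\<in>UNIV - {b}.
      (if g \<in> A \<and> mv g b c 1 \<notin> A then real (g b) * real (g c + 1) else 0))"
  have muA: "mu (T + 1) S = a / N" by (simp add: mu_def level_cmp a_def N_def A_def L1_def)
  have muD: "mu T (shadow S) = d / NT" by (simp add: mu_def level_cmp d_def NT_def D_def L0_def)
  have AL1: "A \<subseteq> L1" by (simp add: A_def)
  have DL0: "D \<subseteq> L0" by (simp add: D_def)
  have finL0: "finite L0" and finL1: "finite L1" by (simp_all add: L0_def L1_def)
  have n1: "1 \<le> n" by (simp add: n_def Suc_le_eq card_gt_0_iff)
  have indsum: "(\<Sum>g\<in>L1. ind A g) = a"
  proof -
    have "(\<Sum>g\<in>L1. ind A g) = (\<Sum>g\<in>L1. if g \<in> A then 1 else 0)"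
      by (simp add: ind_def)
    also have "\<dots> = (\<Sum>g\<in>{g \<in> L1. g \<in> A}. 1)"
      by (rule sum.inter_filter[symmetric]) (rule finL1)
    also have "{g \<in> L1. g \<in> A} = A" using AL1 by auto
    finally show ?thesis by (simp add: a_def)
  qed
  have rowsum: "(\<Sum>b\<in>UNIV. real (g b)) = real (Suc T)" if "g \<in> L1" for g
    using that by (simp add: L1_def cmp_def flip: of_nat_sum)
  have F1: "(\<Sum>f\<in>L0. phi f) = real (Suc T) * a"
  proof -
    have "(\<Sum>f\<in>L0. phi f) = (\<Sum>f\<in>L0. \<Sum>b\<in>UNIV. real (Suc (f b)) * ind A (f(b := Suc (f b))))"
      unfolding phi_def ind_def by (intro sum.cong refl) simp
    also have "\<dots> = (\<Sum>g\<in>L1. \<Sum>b\<in>UNIV. real (g b) * ind A g)"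
      unfolding L0_def L1_def by (rule G_reindex)
    also have "\<dots> = (\<Sum>g\<in>L1. real (Suc T) * ind A g)"
      by (rule sum.cong[OF refl]) (simp add: rowsum flip: sum_distrib_right)
    also have "\<dots> = real (Suc T) * (\<Sum>g\<in>L1. ind A g)" by (rule sum_distrib_left[symmetric])
    finally show ?thesis using indsum by simp
  qed
  have phi0: "phi f = 0" if "f \<in> L0 - D" for f
  proof -
    have "f(b := Suc (f b)) \<notin> A" for b
    proof
      assume "f(b := Suc (f b)) \<in> A"
      moreover have "(\<lambda>c. f c + unit_vec b c) = f(b := Suc (f b))"
        by (auto simp: unit_vec_def fun_eq_iff)
      ultimately have "(\<lambda>c. f c + unit_vec b c) \<in> S" by (simp add: A_def)
      then have "f \<in> shadow S" by (auto simp: shadow_def)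
      then show False using that by (simp add: D_def)
    qed
    then show ?thesis by (simp add: phi_def)
  qed
  have sumD: "(\<Sum>f\<in>L0. phi f) = (\<Sum>f\<in>D. phi f)"
    by (rule sum.mono_neutral_right[OF finL0 DL0]) (use phi0 in auto)
  have sqD: "(\<Sum>f\<in>D. (phi f)\<^sup>2) \<le> (\<Sum>f\<in>L0. (phi f)\<^sup>2)"
    by (rule sum_mono2[OF finL0 DL0]) simp
  have CS: "(real (Suc T) * a)\<^sup>2 \<le> d * (\<Sum>f\<in>L0. (phi f)\<^sup>2)"
  proof -
    have "(real (Suc T) * a)\<^sup>2 = (\<Sum>f\<in>D. phi f)\<^sup>2" using F1 sumD by simp
    also have "\<dots> \<le> d * (\<Sum>f\<in>D. (phi f)\<^sup>2)" unfolding d_def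
      by (rule cs_count) (rule finite_subset[OF DL0 finL0])
    also have "\<dots> \<le> d * (\<Sum>f\<in>L0. (phi f)\<^sup>2)" using sqD by (simp add: d_def mult_left_mono)
    finally show ?thesis .
  qed
  define R where "R g b = (\<Sum>c\<in>UNIV - {b}. if mv g b c 1 \<notin> A then real (g c + 1) else 0)" for g and b :: 'b
  have F4: "(\<Sum>f\<in>L0. (phi f)\<^sup>2) = real (Suc T) * (real T + n) * a - W"
  proof -
    have "(\<Sum>f\<in>L0. (phi f)\<^sup>2) = (\<Sum>f\<in>L0. \<Sum>b\<in>UNIV. real (Suc (f b)) *
        (ind A (f(b := Suc (f b))) * phi ((f(b := Suc (f b)))(b := (f(b := Suc (f b))) b - 1))))"
    proof (rule sum.cong[OF refl])
      fix f
      have "(phi f)\<^sup>2 = (\<Sum>b\<in>UNIV. (if f(b := Suc (f b)) \<in> A then real (Suc (f b)) else 0)) * phi f"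
        by (simp add: power2_eq_square phi_def)
      also have "\<dots> = (\<Sum>b\<in>UNIV. (if f(b := Suc (f b)) \<in> A then real (Suc (f b)) else 0) * phi f)"
        by (rule sum_distrib_right)
      also have "\<dots> = (\<Sum>b\<in>UNIV. real (Suc (f b)) *
          (ind A (f(b := Suc (f b))) * phi ((f(b := Suc (f b)))(b := (f(b := Suc (f b))) b - 1))))"
        by (rule sum.cong[OF refl]) (simp add: ind_def)
      finally show "(phi f)\<^sup>2 = \<dots>" .
    qed
    also have "\<dots> = (\<Sum>g\<in>L1. \<Sum>b\<in>UNIV. real (g b) * (ind A g * phi (g(b := g b - 1))))"
      unfolding L0_def L1_def by (rule G_reindex[where F = "\<lambda>g b. ind A g * phi (g(b := g b - 1))"])
    also have "\<dots> = (\<Sum>g\<in>L1. \<Sum>b\<in>UNIV. (if g \<in> A then real (g b) * (real T + n) - real (g b) * R g b else 0))"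
    proof (intro sum.cong refl)
      fix g b assume g: "g \<in> L1"
      show "real (g b) * (ind A g * phi (g(b := g b - 1)))
          = (if g \<in> A then real (g b) * (real T + n) - real (g b) * R g b else 0)"
      proof (cases "g b = 0")
        case True then show ?thesis by simp
      next
        case False
        show ?thesis
        proof (cases "g \<in> A")
          case True
          have e: "phi (g(b := g b - 1)) = real T + n - R g b"
            using phi_dn[of g T b A] g False True unfolding phi_def R_def n_def L1_def by simp
          show ?thesis using True unfolding e by (simp add: ind_def algebra_simps)
        next
          case False then show ?thesis by (simp add: ind_def)
        qed
      qed
    qed
    also have "\<dots> = (real T + n) * (\<Sum>g\<in>L1. if g \<in> A then (\<Sum>b\<in>UNIV. real (g b)) else 0)
        - (\<Sum>g\<in>L1. \<Sum>b\<in>UNIV. if g \<in> A then real (g b) * R g b else 0)"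
    proof -
      have "(\<Sum>g\<in>L1. \<Sum>b\<in>UNIV. (if g \<in> A then real (g b) * (real T + n) - real (g b) * R g b else 0))
          = (\<Sum>g\<in>L1. (real T + n) * (if g \<in> A then (\<Sum>b\<in>UNIV. real (g b)) else 0)
              - (\<Sum>b\<in>UNIV. if g \<in> A then real (g b) * R g b else 0))"
        by (rule sum.cong[OF refl]) (simp add: sum_subtractf sum_distrib_left sum_distrib_right mult.commute)
      then show ?thesis by (simp add: sum_subtractf sum_distrib_left)
    qed
    also have "(\<Sum>g\<in>L1. if g \<in> A then (\<Sum>b\<in>UNIV. real (g b)) else 0) = real (Suc T) * a"
    proof -
      have "(\<Sum>g\<in>L1. if g \<in> A then (\<Sum>b\<in>UNIV. real (g b)) else 0) = (\<Sum>g\<in>L1. real (Suc T) * ind A g)"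
        by (rule sum.cong[OF refl]) (simp add: rowsum ind_def)
      then show ?thesis using indsum by (simp add: sum_distrib_left[symmetric])
    qed
    also have "(\<Sum>g\<in>L1. \<Sum>b\<in>UNIV. if g \<in> A then real (g b) * R g b else 0) = W"
      unfolding W_def R_def
      by (intro sum.cong refl) (auto simp: sum_distrib_left intro!: sum.cong split: if_splits)
    finally show ?thesis by (simp add: algebra_simps)
  qed
  have Npos: "0 < N"
  proof -
    define p where "p = ((\<lambda>_. 0)(undefined := Suc T) :: 'b \<Rightarrow> nat)"
    have "sum p UNIV = Suc T" using sum_upd_nat[of undefined UNIV "\<lambda>_. 0::nat" "Suc T"] by (simp add: p_def)
    then have "p \<in> L1" by (simp add: L1_def cmp_def)
    then have "L1 \<noteq> {}" by auto
    then show ?thesis using finL1 by (simp add: N_def card_gt_0_iff)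
  qed
  define m where "m = a / N"
  have cent: "(\<Sum>g\<in>L1. ind A g - m) = 0"
    using indsum Npos by (simp add: sum_subtractf m_def N_def)
  have ind2: "(\<Sum>g\<in>L1. (ind A g)\<^sup>2) = a"
  proof -
    have "(\<Sum>g\<in>L1. (ind A g)\<^sup>2) = (\<Sum>g\<in>L1. ind A g)"
      by (rule sum.cong[OF refl]) (simp add: ind_def)
    then show ?thesis using indsum by simp
  qed
  have sqm: "(\<Sum>g\<in>L1. (ind A g - m)\<^sup>2) = a - a\<^sup>2 / N"
  proof -
    have "(\<Sum>g\<in>L1. ((ind A g - m) + m)\<^sup>2) = (\<Sum>g\<in>L1. (ind A g - m)\<^sup>2) + N * m\<^sup>2"
      using centered_sq[OF finL1 cent, of m] by (simp add: N_def)
    then have "(\<Sum>g\<in>L1. (ind A g - m)\<^sup>2) = a - N * m\<^sup>2" using ind2 by simp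
    then show ?thesis using Npos by (simp add: m_def power2_eq_square)
  qed
  have P: "2 * (real (Suc T) + n - 1) * (\<Sum>g\<in>L1. (ind A g - m)\<^sup>2) \<le> EE UNIV (Suc T) (\<lambda>g. ind A g - m)"
    using poinc[of "\<lambda>g. ind A g - m" UNIV "Suc T"] cent by (simp add: L1_def n_def)
  have Wswap: "(\<Sum>b\<in>(UNIV::'b set). \<Sum>c\<in>UNIV - {b}. \<Sum>g\<in>cmp UNIV (Suc T).
      (if g \<in> A \<and> mv g b c 1 \<notin> A then real (g b) * real (g c + 1) else 0)) = W"
  proof -
    have "(\<Sum>b\<in>(UNIV::'b set). \<Sum>c\<in>UNIV - {b}. \<Sum>g\<in>cmp UNIV (Suc T).
        (if g \<in> A \<and> mv g b c 1 \<notin> A then real (g b) * real (g c + 1) else 0))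
        = (\<Sum>b\<in>(UNIV::'b set). \<Sum>g\<in>cmp UNIV (Suc T). \<Sum>c\<in>UNIV - {b}.
        (if g \<in> A \<and> mv g b c 1 \<notin> A then real (g b) * real (g c + 1) else 0))"
      by (rule sum.cong[OF refl]) (rule sum.swap)
    also have "\<dots> = W" unfolding W_def L1_def by (rule sum.swap)
    finally show ?thesis .
  qed
  have F5: "(real T + n) * (a - a\<^sup>2 / N) \<le> W"
  proof -
    have "EE UNIV (Suc T) (\<lambda>g. ind A g - m) = EE UNIV (Suc T) (ind A)" by (rule EE_shift)
    then have "2 * (real (Suc T) + n - 1) * (a - a\<^sup>2 / N) \<le> 2 * W"
      using P sqm EE_ind[of "Suc T" A] Wswap by simp
    moreover have e: "real (Suc T) + n - 1 = real T + n" by simp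
    ultimately have "2 * ((real T + n) * (a - a\<^sup>2 / N)) \<le> 2 * W" by (simp only: e mult.assoc)
    then show ?thesis by linarith
  qed
  have F7: "N * real (Suc T) = NT * (real T + n)"
  proof -
    have "(\<Sum>f\<in>L0. \<Sum>b\<in>UNIV. real (Suc (f b)) * 1) = (\<Sum>g\<in>L1. \<Sum>b\<in>UNIV. real (g b) * 1)"
      unfolding L0_def L1_def by (rule G_reindex[where F = "\<lambda>_ _. 1"])
    moreover have "(\<Sum>f\<in>L0. \<Sum>b\<in>UNIV. real (Suc (f b)) * 1) = (\<Sum>f\<in>L0. real T + n)"
    proof (rule sum.cong[OF refl])
      fix f assume f: "f \<in> L0"
      have "(\<Sum>b\<in>UNIV. real (Suc (f b)) * 1) = (\<Sum>b\<in>UNIV. real (f b)) + n"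
        by (simp add: sum.distrib n_def)
      also have "(\<Sum>b\<in>UNIV. real (f b)) = real T" using f by (simp add: L0_def cmp_def flip: of_nat_sum)
      finally show "(\<Sum>b\<in>UNIV. real (Suc (f b)) * 1) = real T + n" .
    qed
    moreover have "(\<Sum>g\<in>L1. \<Sum>b\<in>UNIV. real (g b) * 1) = (\<Sum>g\<in>L1. real (Suc T))"
      by (rule sum.cong[OF refl]) (simp add: rowsum)
    ultimately show ?thesis by (simp add: N_def NT_def mult.commute)
  qed
  have main: "(real (Suc T) * a)\<^sup>2 \<le> d * ((real T + n) * (real T * a + a\<^sup>2 / N))"
  proof -
    have "(\<Sum>f\<in>L0. (phi f)\<^sup>2) \<le> (real T + n) * (real T * a + a\<^sup>2 / N)"
      using F4 F5 by (simp add: algebra_simps)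
    then have "d * (\<Sum>f\<in>L0. (phi f)\<^sup>2) \<le> d * ((real T + n) * (real T * a + a\<^sup>2 / N))"
      by (rule mult_left_mono) (simp add: d_def)
    then show ?thesis using CS by linarith
  qed
  have a0: "0 \<le> a" and d0: "0 \<le> d" and NT0: "0 \<le> NT" by (simp_all add: a_def d_def NT_def)
  show ?thesis
  proof (cases "x = 0")
    case True then show ?thesis using muD d0 NT0 by simp
  next
    case False
    then have xp: "0 < x" using assms(1) by simp
    have hyp: "x / (real T + 1 + x) \<le> a / N" using assms(2) muA by simp
    then have "x * N \<le> a * (real T + 1 + x)"
      using Npos xp by (simp add: divide_le_eq le_divide_eq field_simps)
    moreover have "0 < x * N" using xp Npos by simp
    ultimately have "0 < a * (real T + 1 + x)" by linarith
    moreover have "0 < real T + 1 + x" using xp by simp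
    ultimately have ap: "0 < a" by (simp add: zero_less_mult_iff)
    have NTp: "0 < NT"
    proof -
      have "0 < N * real (Suc T)" using Npos by simp
      then have "0 < NT * (real T + n)" using F7 by simp
      moreover have "0 < real T + n" using n1 by simp
      ultimately show ?thesis by (simp add: zero_less_mult_iff)
    qed
    have k1: "real (Suc T) * a * NT \<le> d * (real T * N + a)"
    proof -
      have "(real (Suc T) * a)\<^sup>2 * N \<le> d * ((real T + n) * (real T * a + a\<^sup>2 / N)) * N"
        using main Npos by (simp add: mult_right_mono)
      also have "d * ((real T + n) * (real T * a + a\<^sup>2 / N)) * N = d * (real T + n) * a * (real T * N + a)"
        using Npos by (simp add: field_simps power2_eq_square)
      finally have "(real (Suc T) * a)\<^sup>2 * N \<le> d * (real T + n) * a * (real T * N + a)" .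
      then have "(real (Suc T) * a)\<^sup>2 * N * NT \<le> d * (real T + n) * a * (real T * N + a) * NT"
        by (rule mult_right_mono) (use NTp in simp)
      also have "d * (real T + n) * a * (real T * N + a) * NT = d * ((real T + n) * NT) * a * (real T * N + a)"
        by (simp add: mult_ac)
      also have "(real T + n) * NT = N * real (Suc T)" using F7 by (simp add: mult.commute)
      finally have "(real (Suc T) * a)\<^sup>2 * N * NT \<le> d * (N * real (Suc T)) * a * (real T * N + a)" .
      then have q: "(real (Suc T) * a * NT) * (real (Suc T) * a * N) \<le> (d * (real T * N + a)) * (real (Suc T) * a * N)"
        by (simp add: power2_eq_square algebra_simps)
      have pos: "0 < real (Suc T) * a * N" using ap Npos by simp
      show ?thesis by (rule mult_right_le_imp_le[OF q pos])
    qed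
    have k2: "x * NT * (real T * N + a) \<le> real (Suc T) * a * NT * (real T + x)"
    proof -
      have "x * N * real T \<le> a * (real T + 1 + x) * real T"
        using \<open>x * N \<le> a * (real T + 1 + x)\<close> by (simp add: mult_right_mono)
      then have "x * (real T * N + a) \<le> real (Suc T) * a * (real T + x)"
        using xp ap by (simp add: algebra_simps)
      then have "x * (real T * N + a) * NT \<le> real (Suc T) * a * (real T + x) * NT"
        by (rule mult_right_mono) (use NTp in simp)
      then show ?thesis by (simp add: mult_ac)
    qed
    have k3: "real (Suc T) * a * NT * (real T + x) \<le> d * (real T * N + a) * (real T + x)"
      by (rule mult_right_mono[OF k1]) (use xp in simp)
    have k4: "(x * NT) * (real T * N + a) \<le> (d * (real T + x)) * (real T * N + a)"
      using k2 k3 by (simp add: mult_ac)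
    have k5: "0 < real T * N + a" using ap Npos by (simp add: add_nonneg_pos)
    have "x * NT \<le> d * (real T + x)" by (rule mult_right_le_imp_le[OF k4 k5])
    then have "x / (real T + x) \<le> d / NT"
      using xp NTp by (simp add: divide_le_eq le_divide_eq field_simps)
    then show ?thesis using muD by simp
  qed
qed

end
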